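(* Let $X,Y$ be $c$-free with respect to $(\varphi,\psi)$ on $\mathbb{C}\langle X,Y\rangle$, let $A,B\in M_N(\mathbb{C})$ and $\mathbf{\Psi}=(I-z(AX+BY))^{-1}=\sum_{n\ge0}z^n(AX+BY)^n$. Define $H_X=\beta^{b,\psi}_X(\mathbf{\Psi})$, $H_Y=\beta^{b,\psi}_Y(\mathbf{\Psi})$, $F_X=\beta^{\delta,\psi}_X(X\mathbf{\Psi})$, $F_Y=\beta^{\delta,\psi}_Y(Y\mathbf{\Psi})$, $F^\varphi_X=\beta^{\delta,\varphi}_X(X\mathbf{\Psi})$, $F^\varphi_Y=\beta^{\delta,\varphi}_Y(Y\mathbf{\Psi})$. Then, as formal power series in $z$ with coefficients in $M_N(\mathbb{C})$, $$H_X=(I-zAF_X)^{-1},\quad H_Y=(I-zBF_Y)^{-1},\quad F_X=\tilde\eta^\psi_X(zH_YA),\quad F_Y=\tilde\eta^\psi_Y(zH_XB),$$ $$F^\varphi_X=\tilde\eta^\varphi_X(zH_YA),\qquad F^\varphi_Y=\tilde\eta^\varphi_Y(zH_XB).$$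
   Context: $X,Y$ are $c$-free w.r.t. $(\varphi,\psi)$ (unital functionals on $\mathbb{C}\langle X,Y\rangle$) if $\psi(u_1\cdots u_n)=0$ and $\varphi(u_1\cdots u_n)=\prod\varphi(u_j)$ whenever the $u_j$ alternate between $\mathbb{C}\langle X\rangle$ and $\mathbb{C}\langle Y\rangle$ and $\psi(u_j)=0$. Boolean cumulants $\beta^\theta_n$ of $\theta$: $\theta(a_1\cdots a_n)=\sum_{k}\beta^\theta_k(a_1,\dots,a_k)\theta(a_{k+1}\cdots a_n)$. Block factorization of a monomial $W\neq1$: $W=U_1\cdots U_n$ into nonempty pure-$X$/pure-$Y$ monomials alternating. $\beta^{b,\theta}_X(1)=1$, $\beta^{b,\theta}_X(W)=\beta^\theta_n(U_1,\dots,U_n)$ if $W$ starts and ends with the letter $X$, else $0$; $\beta^{\delta,\theta}_X(1)=1$, $\beta^{\delta,\theta}_X(Z_1\cdots Z_k)=\beta^\theta_k(Z_1,\dots,Z_k)$ if $Z_1=Z_k=X$, else $0$; similarly with $Y$; extended linearly. All functionals are applied entrywise to matrices and coefficientwise to formal power series in $z$. For a matrix-valued formal power series $C$ with zero constant term, $\tilde\eta^\theta_X(C):=\sum_{k\ge1}\beta^\theta_k(X,\dots,X)C^{k-1}$ (similarly for $Y$). *)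

theory Defs
  imports "HOL-Analysis.Analysis"
begin

text \<open>Monomials in the letters X, Y are lists of booleans: True = X, False = Y.
  A (unital) linear functional on C<X,Y> is given by its values on monomials,
  a function bool list => complex with value 1 on the empty word.
  Polynomials are finitely supported coefficient functions bool list => complex.\<close>

type_synonym ncpoly = "bool list \<Rightarrow> complex"

definition supp :: "ncpoly \<Rightarrow> bool list set" where
  "supp p = {w. p w \<noteq> 0}"

definition lin :: "(bool list \<Rightarrow> complex) \<Rightarrow> ncpoly \<Rightarrow> complex" where
  "lin \<theta> p = (\<Sum>w\<in>supp p. p w * \<theta> w)"

definition pone :: ncpoly where
  "pone w = (if w = [] then 1 else 0)"

definition pmul :: "ncpoly \<Rightarrow> ncpoly \<Rightarrow> ncpoly" where
  "pmul p q w = (\<Sum>k\<le>length w. p (take k w) * q (drop k w))"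

definition pprod :: "ncpoly list \<Rightarrow> ncpoly" where
  "pprod us = foldr pmul us pone"

text \<open>Polynomial in the single letter b (b = True: C<X>, b = False: C<Y>).\<close>
definition in_alg :: "bool \<Rightarrow> ncpoly \<Rightarrow> bool" where
  "in_alg b p \<longleftrightarrow> finite (supp p) \<and> (\<forall>w\<in>supp p. \<forall>c\<in>set w. c = b)"

definition unital :: "(bool list \<Rightarrow> complex) \<Rightarrow> bool" where
  "unital \<theta> \<longleftrightarrow> \<theta> [] = 1"

definition c_free :: "(bool list \<Rightarrow> complex) \<Rightarrow> (bool list \<Rightarrow> complex) \<Rightarrow> bool" where
  "c_free \<phi> \<psi> \<longleftrightarrow>
     (\<forall>us b. us \<noteq> [] \<longrightarrow>
        (\<forall>j<length us. in_alg (if even j then b else \<not> b) (us ! j)) \<longrightarrow>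
        (\<forall>j<length us. lin \<psi> (us ! j) = 0) \<longrightarrow>
        lin \<psi> (pprod us) = 0 \<and> lin \<phi> (pprod us) = (\<Prod>j<length us. lin \<phi> (us ! j)))"

text \<open>bcum theta [a1,...,an] = beta^theta_n(a1,...,an) for monomial arguments
  (multilinear, so determined by monomials), from the recursion
  theta(a1...an) = sum_{k=1}^n beta_k(a1..ak) theta(a_{k+1}...a_n).\<close>
function bcum :: "(bool list \<Rightarrow> complex) \<Rightarrow> bool list list \<Rightarrow> complex" where
  "bcum \<theta> as = (if as = [] then 0 else
      \<theta> (concat as) - (\<Sum>k\<in>{1..<length as}. bcum \<theta> (take k as) * \<theta> (concat (drop k as))))"
  by pat_completeness auto
termination by (relation "Wellfounded.measure (\<lambda>(\<theta>, as). length as)") auto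

declare bcum.simps [simp del]

text \<open>Block factorization into maximal pure-X / pure-Y runs.\<close>
fun blocks :: "bool list \<Rightarrow> bool list list" where
  "blocks [] = []"
| "blocks (c # w) = (case blocks w of [] \<Rightarrow> [[c]]
      | b # bs \<Rightarrow> (if hd b = c then (c # b) # bs else [c] # b # bs))"

definition beta_b :: "(bool list \<Rightarrow> complex) \<Rightarrow> bool \<Rightarrow> bool list \<Rightarrow> complex" where
  "beta_b \<theta> L W = (if W = [] then 1
      else if hd W = L \<and> last W = L then bcum \<theta> (blocks W) else 0)"

definition beta_delta :: "(bool list \<Rightarrow> complex) \<Rightarrow> bool \<Rightarrow> bool list \<Rightarrow> complex" where
  "beta_delta \<theta> L W = (if W = [] then 1
      else if hd W = L \<and> last W = L then bcum \<theta> (map (\<lambda>c. [c]) W) else 0)"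

definition smat :: "complex \<Rightarrow> complex^'n^'n \<Rightarrow> complex^'n^'n" where
  "smat c M = (\<chi> i j. c * M $ i $ j)"

text \<open>Matrix coefficient of the word w in (AX+BY)^{|w|}: C_{w1} ... C_{wn}, C_X = A, C_Y = B.\<close>
definition wmat :: "complex^'n^'n \<Rightarrow> complex^'n^'n \<Rightarrow> bool list \<Rightarrow> complex^'n^'n" where
  "wmat A B w = foldr (\<lambda>c M. (if c then A else B) ** M) w (mat 1)"

text \<open>Entrywise and coefficientwise application of the linear functional L to
  Psi = sum_n z^n (AX+BY)^n, with (AX+BY)^n = sum_{|w|=n} wmat A B w * w.\<close>
definition apply_Psi :: "(bool list \<Rightarrow> complex) \<Rightarrow> complex^'n^'n \<Rightarrow> complex^'n^'n \<Rightarrow> nat \<Rightarrow> complex^'n^'n" where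
  "apply_Psi L A B n = (\<Sum>w\<in>{w. length w = n}. smat (L w) (wmat A B w))"

text \<open>Same for the letter Z times Psi (Z = X if c, Y otherwise).\<close>
definition apply_ZPsi :: "(bool list \<Rightarrow> complex) \<Rightarrow> bool \<Rightarrow> complex^'n^'n \<Rightarrow> complex^'n^'n \<Rightarrow> nat \<Rightarrow> complex^'n^'n" where
  "apply_ZPsi L c A B n = (\<Sum>w\<in>{w. length w = n}. smat (L (c # w)) (wmat A B w))"

type_synonym ('n) mps = "nat \<Rightarrow> complex^('n::finite)^'n"

definition ps_one :: "('n::finite) mps" where
  "ps_one n = (if n = 0 then mat 1 else 0)"

definition ps_mult :: "('n::finite) mps \<Rightarrow> ('n::finite) mps \<Rightarrow> 'n mps" where
  "ps_mult P Q n = (\<Sum>k\<le>n. P k ** Q (n - k))"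

definition ps_pow :: "('n::finite) mps \<Rightarrow> nat \<Rightarrow> 'n mps" where
  "ps_pow P k = (ps_mult P ^^ k) ps_one"

definition ps_z :: "('n::finite) mps \<Rightarrow> 'n mps" where
  "ps_z P n = (if n = 0 then 0 else P (n - 1))"

definition ps_inverse_of :: "('n::finite) mps \<Rightarrow> 'n mps \<Rightarrow> bool" where
  "ps_inverse_of Q P \<longleftrightarrow> ps_mult Q P = ps_one \<and> ps_mult P Q = ps_one"

text \<open>tilde eta^theta_L(C) = sum_{k>=1} beta_k(L,...,L) C^{k-1}, for C with zero
  constant term; the n-th coefficient only receives contributions from k <= n+1.\<close>
definition eta_tilde :: "(bool list \<Rightarrow> complex) \<Rightarrow> bool \<Rightarrow> ('n::finite) mps \<Rightarrow> 'n mps" where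
  "eta_tilde \<theta> L C n = (\<Sum>k\<in>{1..n+1}. smat (bcum \<theta> (replicate k [L])) (ps_pow C (k - 1) n))"

end

theory Submission
  imports Defs
begin

definition mon :: "bool list \<Rightarrow> ncpoly" where
  "mon u = (\<lambda>w. if w = u then 1 else 0)"
definition padd :: "ncpoly \<Rightarrow> ncpoly \<Rightarrow> ncpoly" where
  "padd p q = (\<lambda>w. p w + q w)"
definition psc :: "complex \<Rightarrow> ncpoly \<Rightarrow> ncpoly" where
  "psc c p = (\<lambda>w. c * p w)"
definition pzero :: ncpoly where "pzero = (\<lambda>w. 0)"
definition fin :: "ncpoly \<Rightarrow> bool" where "fin p \<longleftrightarrow> finite (supp p)"

lemma pmul_Nil[simp]: "pmul p q [] = p [] * q []"
  by (simp add: pmul_def)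

lemma pmul_Cons: "pmul p q (c#w) = p [] * q (c#w) + pmul (\<lambda>u. p (c#u)) q w"
  unfolding pmul_def by (simp only: length_Cons sum.atMost_Suc_shift) simp

lemma pmul_left_lin: "pmul (\<lambda>u. a * f u + g u) r w = a * pmul f r w + pmul g r w"
  unfolding pmul_def by (simp add: algebra_simps sum.distrib sum_distrib_left)

lemma pmul_right_lin: "pmul r (\<lambda>u. a * f u + g u) w = a * pmul r f w + pmul r g w"
  unfolding pmul_def by (simp add: algebra_simps sum.distrib sum_distrib_left)

lemma pmul_assoc: "pmul (pmul p q) r w = pmul p (pmul q r) w"
proof (induction w arbitrary: p)
  case Nil then show ?case by simp
next
  case (Cons c w)
  have e: "(\<lambda>u. pmul p q (c#u)) = (\<lambda>u. p [] * q (c#u) + pmul (\<lambda>u. p (c#u)) q u)"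
    by (simp add: pmul_Cons)
  show ?case
    by (simp add: pmul_Cons e pmul_left_lin Cons.IH algebra_simps)
qed

lemma pmul_assoc': "pmul (pmul p q) r = pmul p (pmul q r)"
  using pmul_assoc by blast

lemma pmul_pone_left[simp]: "pmul pone q = q"
proof
  fix w show "pmul pone q w = q w"
    unfolding pmul_def pone_def
    by (subst sum.remove[of _ 0]) (auto intro!: sum.neutral)
qed

lemma pmul_pone_right[simp]: "pmul p pone = p"
proof
  fix w show "pmul p pone w = p w"
    unfolding pmul_def pone_def
    by (subst sum.remove[of _ "length w"]) (auto intro!: sum.neutral)
qed

lemma pmul_mono_Cons: "pmul (mon [c]) q (d#w) = (if d = c then q w else 0)"
proof -
  have "(\<lambda>u. mon [c] (d#u)) = (if d = c then pone else pzero)"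
    by (auto simp: mon_def pone_def pzero_def)
  moreover have "pmul pzero q w = 0" by (simp add: pmul_def pzero_def)
  ultimately show ?thesis by (simp add: pmul_Cons mon_def)
qed

lemma pmul_mono_Nil: "pmul (mon [c]) q [] = 0"
  by (simp add: mon_def)

lemma pmul_zero_left[simp]: "pmul pzero q = pzero" "pmul (\<lambda>_. 0) q = (\<lambda>_. 0)"
  by (auto simp: pmul_def pzero_def)
lemma pmul_zero_right[simp]: "pmul q pzero = pzero" "pmul q (\<lambda>_. 0) = (\<lambda>_. 0)"
  by (auto simp: pmul_def pzero_def)

lemma pmul_sum_right: "pmul r (\<lambda>w. \<Sum>j\<in>J. f j w) w = (\<Sum>j\<in>J. pmul r (f j) w)"
  unfolding pmul_def by (simp add: sum_distrib_left sum.swap[of _ J])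
lemma pmul_sum_left: "pmul (\<lambda>w. \<Sum>j\<in>J. f j w) r w = (\<Sum>j\<in>J. pmul (f j) r w)"
  unfolding pmul_def by (simp add: sum_distrib_right sum.swap[of _ J])

lemma pmul_scale_right: "pmul r (\<lambda>w. a * f w) w = a * pmul r f w"
  unfolding pmul_def by (simp add: sum_distrib_left algebra_simps)
lemma pmul_scale_left: "pmul (\<lambda>w. a * f w) r w = a * pmul f r w"
  unfolding pmul_def by (simp add: sum_distrib_left algebra_simps)
lemma pmul_add_right: "pmul r (\<lambda>w. f w + g w) w = pmul r f w + pmul r g w"
  unfolding pmul_def by (simp add: sum.distrib algebra_simps)
lemma pmul_add_left: "pmul (\<lambda>w. f w + g w) r w = pmul f r w + pmul g r w"
  unfolding pmul_def by (simp add: sum.distrib algebra_simps)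
lemma pmul_diff_right: "pmul r (\<lambda>w. f w - g w) w = pmul r f w - pmul r g w"
  unfolding pmul_def by (simp add: sum_subtractf algebra_simps)
lemma pmul_diff_left: "pmul (\<lambda>w. f w - g w) r w = pmul f r w - pmul g r w"
  unfolding pmul_def by (simp add: sum_subtractf algebra_simps)

lemma supp_pmul: "supp (pmul p q) \<subseteq> (\<lambda>(u,v). u @ v) ` (supp p \<times> supp q)"
proof
  fix w assume "w \<in> supp (pmul p q)"
  then have "(\<Sum>k\<le>length w. p (take k w) * q (drop k w)) \<noteq> 0" by (simp add: supp_def pmul_def)
  then obtain k where "p (take k w) * q (drop k w) \<noteq> 0" by (meson sum.neutral)
  moreover have "w = take k w @ drop k w" by simp
  ultimately show "w \<in> (\<lambda>(u,v). u @ v) ` (supp p \<times> supp q)"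
    unfolding supp_def image_iff by (intro bexI[of _ "(take k w, drop k w)"]) auto
qed

lemma fin_pmul: "fin p \<Longrightarrow> fin q \<Longrightarrow> fin (pmul p q)"
  unfolding fin_def by (rule finite_subset[OF supp_pmul]) (intro finite_imageI finite_cartesian_product)

lemma fin_mono[simp]: "fin (mon u)" by (simp add: fin_def supp_def mon_def)
lemma fin_pone[simp]: "fin pone" by (simp add: fin_def supp_def pone_def)
lemma fin_zero[simp]: "fin pzero" "fin (\<lambda>_. 0)" by (simp_all add: fin_def supp_def pzero_def)
lemma fin_add: "fin p \<Longrightarrow> fin q \<Longrightarrow> fin (\<lambda>w. p w + q w)"
  unfolding fin_def supp_def by (rule finite_subset[of _ "{w. p w \<noteq> 0} \<union> {w. q w \<noteq> 0}"]) auto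
lemma fin_diff: "fin p \<Longrightarrow> fin q \<Longrightarrow> fin (\<lambda>w. p w - q w)"
  unfolding fin_def supp_def by (rule finite_subset[of _ "{w. p w \<noteq> 0} \<union> {w. q w \<noteq> 0}"]) auto
lemma fin_scale: "fin p \<Longrightarrow> fin (\<lambda>w. a * p w)"
  unfolding fin_def supp_def by (rule finite_subset[of _ "{w. p w \<noteq> 0}"]) auto
lemma fin_sum: "finite J \<Longrightarrow> (\<And>j. j \<in> J \<Longrightarrow> fin (f j)) \<Longrightarrow> fin (\<lambda>w. \<Sum>j\<in>J. f j w)"
proof (induction J rule: finite_induct)
  case empty then show ?case by simp
next
  case (insert x F)
  then show ?case using fin_add[of "f x" "\<lambda>w. \<Sum>j\<in>F. f j w"] by simp
qed

lemma lin_superset: "finite S \<Longrightarrow> supp p \<subseteq> S \<Longrightarrow> lin \<theta> p = (\<Sum>w\<in>S. p w * \<theta> w)"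
  unfolding lin_def by (rule sum.mono_neutral_left) (auto simp: supp_def)

lemma lin_add: "fin p \<Longrightarrow> fin q \<Longrightarrow> lin \<theta> (\<lambda>w. p w + q w) = lin \<theta> p + lin \<theta> q"
proof -
  assume f: "fin p" "fin q"
  let ?S = "supp p \<union> supp q"
  have fS: "finite ?S" using f by (simp add: fin_def)
  have "lin \<theta> (\<lambda>w. p w + q w) = (\<Sum>w\<in>?S. (p w + q w) * \<theta> w)"
    by (rule lin_superset[OF fS]) (auto simp: supp_def)
  also have "\<dots> = (\<Sum>w\<in>?S. p w * \<theta> w) + (\<Sum>w\<in>?S. q w * \<theta> w)"
    by (simp add: algebra_simps sum.distrib)
  also have "\<dots> = lin \<theta> p + lin \<theta> q"
    using lin_superset[OF fS, of p \<theta>] lin_superset[OF fS, of q \<theta>] by auto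
  finally show ?thesis .
qed

lemma lin_scale: "lin \<theta> (\<lambda>w. a * p w) = a * lin \<theta> p"
proof (cases "a = 0")
  case True then show ?thesis by (simp add: lin_def supp_def)
next
  case False
  then have "supp (\<lambda>w. a * p w) = supp p" by (auto simp: supp_def)
  then show ?thesis by (simp add: lin_def sum_distrib_left algebra_simps)
qed

lemma lin_diff: "fin p \<Longrightarrow> fin q \<Longrightarrow> lin \<theta> (\<lambda>w. p w - q w) = lin \<theta> p - lin \<theta> q"
  using lin_add[of p "\<lambda>w. (-1) * q w" \<theta>] lin_scale[of \<theta> "-1" q] fin_scale[of q "-1"] by simp

lemma lin_sum: "finite J \<Longrightarrow> (\<And>j. j \<in> J \<Longrightarrow> fin (f j)) \<Longrightarrow> lin \<theta> (\<lambda>w. \<Sum>j\<in>J. f j w) = (\<Sum>j\<in>J. lin \<theta> (f j))"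
proof (induction J rule: finite_induct)
  case empty then show ?case by (simp add: lin_def supp_def)
next
  case (insert x F)
  then show ?case using lin_add[of "f x" "\<lambda>w. \<Sum>j\<in>F. f j w" \<theta>] fin_sum[of F f] by simp
qed

lemma lin_mono[simp]: "lin \<theta> (mon u) = \<theta> u"
proof -
  have "supp (mon u) = {u}" by (auto simp: supp_def mon_def)
  then show ?thesis by (simp add: lin_def mon_def)
qed

lemma pone_monoo: "pone = mon []" by (auto simp: pone_def mon_def)

lemma lin_pone: "unital \<theta> \<Longrightarrow> lin \<theta> pone = 1"
  by (simp add: pone_monoo unital_def)

lemma lin_zero[simp]: "lin \<theta> (\<lambda>_. 0) = 0" "lin \<theta> pzero = 0"
  by (simp_all add: lin_def supp_def pzero_def)

definition Qop :: "(bool list \<Rightarrow> complex) \<Rightarrow> ncpoly \<Rightarrow> ncpoly" where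
  "Qop \<theta> p = (\<lambda>w. p w - lin \<theta> p * pone w)"

lemma fin_Qop: "fin p \<Longrightarrow> fin (Qop \<theta> p)"
  unfolding Qop_def by (intro fin_diff fin_scale) simp_all

lemma lin_Qop: "unital \<theta> \<Longrightarrow> fin p \<Longrightarrow> lin \<theta> (Qop \<theta> p) = 0"
  unfolding Qop_def by (subst lin_diff) (simp_all add: fin_scale lin_scale lin_pone)

lemma Qop_lin0: "lin \<theta> p = 0 \<Longrightarrow> Qop \<theta> p = p"
  by (simp add: Qop_def)

lemma in_alg_fin: "in_alg b p \<Longrightarrow> fin p" by (simp add: in_alg_def fin_def)

lemma in_alg_pone[simp]: "in_alg b pone" by (auto simp: in_alg_def supp_def pone_def)
lemma in_alg_mono_rep: "in_alg b (mon (replicate k b))" by (auto simp: in_alg_def supp_def mon_def)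
lemma in_alg_mono1[simp]: "in_alg b (mon [b])" using in_alg_mono_rep[of b 1] by simp

lemma in_alg_subset: assumes "in_alg b p" "in_alg b q" "supp r \<subseteq> supp p \<union> supp q" shows "in_alg b r"
proof -
  have "finite (supp r)" using assms by (meson finite_Un finite_subset in_alg_def)
  moreover have "\<forall>w\<in>supp r. \<forall>c\<in>set w. c = b" using assms unfolding in_alg_def by blast
  ultimately show ?thesis by (simp add: in_alg_def)
qed
lemma in_alg_add: "in_alg b p \<Longrightarrow> in_alg b q \<Longrightarrow> in_alg b (\<lambda>w. p w + q w)"
  by (erule in_alg_subset, assumption) (auto simp: supp_def)
lemma in_alg_diff: "in_alg b p \<Longrightarrow> in_alg b q \<Longrightarrow> in_alg b (\<lambda>w. p w - q w)"
  by (erule in_alg_subset, assumption) (auto simp: supp_def)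
lemma in_alg_scale: "in_alg b p \<Longrightarrow> in_alg b (\<lambda>w. a * p w)"
  by (rule in_alg_subset[of b p p]) (auto simp: supp_def)
lemma in_alg_zero[simp]: "in_alg b (\<lambda>_. 0)" by (simp add: in_alg_def supp_def)
lemma in_alg_sum: "finite J \<Longrightarrow> (\<And>j. j \<in> J \<Longrightarrow> in_alg b (f j)) \<Longrightarrow> in_alg b (\<lambda>w. \<Sum>j\<in>J. f j w)"
proof (induction J rule: finite_induct)
  case empty then show ?case by simp
next
  case (insert x F)
  then show ?case using in_alg_add[of b "f x" "\<lambda>w. \<Sum>j\<in>F. f j w"] by simp
qed

lemma in_alg_Qop: "in_alg b p \<Longrightarrow> in_alg b (Qop \<theta> p)"
  unfolding Qop_def by (intro in_alg_diff in_alg_scale) simp_all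

lemma in_alg_pmul: "in_alg b p \<Longrightarrow> in_alg b q \<Longrightarrow> in_alg b (pmul p q)"
proof -
  assume a: "in_alg b p" "in_alg b q"
  then have "fin (pmul p q)" by (simp add: fin_pmul in_alg_fin)
  moreover have "\<forall>w\<in>supp (pmul p q). \<forall>c\<in>set w. c = b"
  proof (intro ballI)
    fix w c assume "w \<in> supp (pmul p q)" "c \<in> set w"
    then obtain u v where "u \<in> supp p" "v \<in> supp q" "w = u @ v" using supp_pmul[of p q] by fastforce
    then show "c = b" using a \<open>c \<in> set w\<close> by (auto simp: in_alg_def)
  qed
  ultimately show ?thesis by (simp add: in_alg_def fin_def)
qed

lemma Qop_add: "fin p \<Longrightarrow> fin q \<Longrightarrow> Qop \<theta> (\<lambda>w. p w + q w) = (\<lambda>w. Qop \<theta> p w + Qop \<theta> q w)"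
  by (auto simp: Qop_def lin_add algebra_simps)
lemma Qop_scale: "Qop \<theta> (\<lambda>w. a * p w) = (\<lambda>w. a * Qop \<theta> p w)"
  by (auto simp: Qop_def lin_scale algebra_simps)
lemma Qop_sum: "finite J \<Longrightarrow> (\<And>j. j \<in> J \<Longrightarrow> fin (f j)) \<Longrightarrow>
   Qop \<theta> (\<lambda>w. \<Sum>j\<in>J. f j w) = (\<lambda>w. \<Sum>j\<in>J. Qop \<theta> (f j) w)"
  by (auto simp: Qop_def lin_sum algebra_simps sum_subtractf sum_distrib_right sum_distrib_left)

lemma pprod_Nil[simp]: "pprod [] = pone" by (simp add: pprod_def)
lemma pprod_Cons[simp]: "pprod (a#us) = pmul a (pprod us)" by (simp add: pprod_def)
lemma pprod_append: "pprod (us @ vs) = pmul (pprod us) (pprod vs)"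
  by (induction us) (simp_all add: pmul_assoc')
lemma fin_pprod: "(\<And>u. u \<in> set us \<Longrightarrow> fin u) \<Longrightarrow> fin (pprod us)"
  by (induction us) (simp_all add: fin_pmul)

definition alt :: "bool \<Rightarrow> ncpoly list \<Rightarrow> bool" where
  "alt b us \<longleftrightarrow> (\<forall>j<length us. in_alg (if even j then b else \<not> b) (us ! j))"

lemma alt_Nil[simp]: "alt b []" by (simp add: alt_def)
lemma alt_Cons: "alt b (a#us) \<longleftrightarrow> in_alg b a \<and> alt (\<not> b) us"
proof
  assume h: "alt b (a#us)"
  have "in_alg b a" using h[unfolded alt_def, rule_format, of 0] by simp
  moreover have "alt (\<not> b) us" unfolding alt_def
  proof (intro allI impI)
    fix j assume "j < length us"
    then show "in_alg (if even j then \<not> b else \<not> \<not> b) (us ! j)"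
      using h[unfolded alt_def, rule_format, of "Suc j"] by (auto split: if_splits)
  qed
  ultimately show "in_alg b a \<and> alt (\<not> b) us" by simp
next
  assume h: "in_alg b a \<and> alt (\<not> b) us"
  show "alt b (a#us)" unfolding alt_def
  proof (intro allI impI)
    fix j assume "j < length (a#us)"
    then show "in_alg (if even j then b else \<not> b) ((a#us) ! j)"
      using h by (cases j) (auto simp: alt_def split: if_splits)
  qed
qed

lemma alt_append1: "alt b (us @ [x]) \<longleftrightarrow> alt b us \<and> in_alg (if even (length us) then b else \<not> b) x"
proof
  assume h: "alt b (us @ [x])"
  have "alt b us" unfolding alt_def
  proof (intro allI impI)
    fix j assume j: "j < length us"
    then show "in_alg (if even j then b else \<not> b) (us ! j)"
      using h[unfolded alt_def, rule_format, of j] by (simp add: nth_append)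
  qed
  moreover have "in_alg (if even (length us) then b else \<not> b) x"
    using h[unfolded alt_def, rule_format, of "length us"] by simp
  ultimately show "alt b us \<and> in_alg (if even (length us) then b else \<not> b) x" by simp
next
  assume h: "alt b us \<and> in_alg (if even (length us) then b else \<not> b) x"
  show "alt b (us @ [x])" unfolding alt_def
  proof (intro allI impI)
    fix j assume j: "j < length (us @ [x])"
    show "in_alg (if even j then b else \<not> b) ((us @ [x]) ! j)"
    proof (cases "j < length us")
      case True then show ?thesis using h by (simp add: alt_def nth_append)
    next
      case False then have "j = length us" using j by simp
      then show ?thesis using h by simp
    qed
  qed
qed

lemma alt_in_alg: "alt b us \<Longrightarrow> u \<in> set us \<Longrightarrow> \<exists>b'. in_alg b' u"
  unfolding alt_def by (metis in_set_conv_nth)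

lemma alt_fin: "alt b us \<Longrightarrow> u \<in> set us \<Longrightarrow> fin u"
  using alt_in_alg in_alg_fin by blast

lemma cf_psi: "c_free \<phi> \<psi> \<Longrightarrow> us \<noteq> [] \<Longrightarrow> alt b us \<Longrightarrow> (\<forall>u\<in>set us. lin \<psi> u = 0) \<Longrightarrow> lin \<psi> (pprod us) = 0"
  unfolding c_free_def alt_def by (metis nth_mem)

lemma cf_phi: "c_free \<phi> \<psi> \<Longrightarrow> us \<noteq> [] \<Longrightarrow> alt b us \<Longrightarrow> (\<forall>u\<in>set us. lin \<psi> u = 0) \<Longrightarrow>
   lin \<phi> (pprod us) = (\<Prod>j<length us. lin \<phi> (us ! j))"
  unfolding c_free_def alt_def by (metis nth_mem)

inductive inV :: "(bool list \<Rightarrow> complex) \<Rightarrow> bool \<Rightarrow> ncpoly \<Rightarrow> bool" for \<psi> E where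
  gen: "us \<noteq> [] \<Longrightarrow> alt b us \<Longrightarrow> (if even (length us - 1) then b else \<not> b) = E \<Longrightarrow>
        (\<forall>u\<in>set us. lin \<psi> u = 0) \<Longrightarrow> inV \<psi> E (pprod us)"
| zero: "inV \<psi> E (\<lambda>_. 0)"
| add: "inV \<psi> E p \<Longrightarrow> inV \<psi> E q \<Longrightarrow> inV \<psi> E (\<lambda>w. p w + q w)"
| scale: "inV \<psi> E p \<Longrightarrow> inV \<psi> E (\<lambda>w. a * p w)"

lemma inV_fin: "inV \<psi> E p \<Longrightarrow> fin p"
  by (induction rule: inV.induct) (auto intro: fin_pprod alt_fin fin_add fin_scale)

lemma inV_zero'[simp]: "inV \<psi> E pzero" using inV.zero by (simp add: pzero_def)

lemma V1: assumes "c_free \<phi> \<psi>" shows "inV \<psi> E p \<Longrightarrow> lin \<psi> p = 0"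
proof (induction rule: inV.induct)
  case (gen us b) then show ?case using cf_psi assms by blast
next
  case zero then show ?case by simp
next
  case (add p q) then show ?case by (simp add: lin_add inV_fin)
next
  case (scale p a) then show ?case by (simp add: lin_scale)
qed

lemma split_center: "x w = Qop \<psi> x w + lin \<psi> x * pone w"
  by (simp add: Qop_def)

lemma V3: assumes cf: "c_free \<phi> \<psi>" and u\<phi>: "unital \<phi>" and u\<psi>: "unital \<psi>"
  and x: "in_alg (\<not> E) x"
  shows "inV \<psi> E p \<Longrightarrow> lin \<phi> (pmul p x) = lin \<phi> p * lin \<phi> x \<and> lin \<psi> (pmul p x) = 0"
proof (induction rule: inV.induct)
  case (gen us b)
  let ?x0 = "Qop \<psi> x"
  have fx: "fin x" using x in_alg_fin by blast
  have fus: "fin (pprod us)" using gen alt_fin fin_pprod by blast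
  have e: "pmul (pprod us) x = (\<lambda>w. pprod (us @ [?x0]) w + lin \<psi> x * pprod us w)"
  proof
    fix w
    have "pmul (pprod us) x w = pmul (pprod us) (\<lambda>w. ?x0 w + lin \<psi> x * pone w) w"
      by (metis split_center)
    also have "\<dots> = pmul (pprod us) ?x0 w + lin \<psi> x * pprod us w"
      by (simp add: pmul_add_right pmul_scale_right)
    finally show "pmul (pprod us) x w = pprod (us @ [?x0]) w + lin \<psi> x * pprod us w"
      by (simp add: pprod_append)
  qed
  have n: "length us \<ge> 1" using gen by (cases us) auto
  obtain m where m: "length us = Suc m" using n by (cases "length us") auto
  have par: "(if even (length us) then b else \<not> b) = (\<not> E)"
    using gen(3) unfolding m by (cases "even m") auto
  have alt2: "alt b (us @ [?x0])" using gen par x by (simp add: alt_append1 in_alg_Qop)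
  have c2: "\<forall>u\<in>set (us @ [?x0]). lin \<psi> u = 0" using gen lin_Qop[OF u\<psi> fx] by auto
  have f2: "fin (pprod (us @ [?x0]))" using alt2 alt_fin fin_pprod by blast
  have p1: "lin \<psi> (pprod (us @ [?x0])) = 0" using cf_psi[OF cf _ alt2 c2] by simp
  have p2: "lin \<psi> (pprod us) = 0" using cf_psi[OF cf gen(1,2)] gen(4) by simp
  have q1: "lin \<phi> (pprod (us @ [?x0])) = (\<Prod>j<length us. lin \<phi> (us ! j)) * lin \<phi> ?x0"
    using cf_phi[OF cf _ alt2 c2] by (simp add: nth_append)
  have q2: "lin \<phi> (pprod us) = (\<Prod>j<length us. lin \<phi> (us ! j))" using cf_phi[OF cf gen(1,2)] gen(4) by simp
  have q3: "lin \<phi> ?x0 = lin \<phi> x - lin \<psi> x"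
    unfolding Qop_def using fx by (simp add: lin_diff fin_scale lin_scale lin_pone[OF u\<phi>])
  show ?case unfolding e
    using f2 fus by (simp add: lin_add fin_scale lin_scale p1 p2 q1 q2 q3 algebra_simps)
next
  case zero then show ?case by simp
next
  case (add p q)
  have fx: "fin x" using x in_alg_fin by blast
  have e: "pmul (\<lambda>w. p w + q w) x = (\<lambda>w. pmul p x w + pmul q x w)" by (rule ext, rule pmul_add_left)
  have fp: "fin (pmul p x)" "fin (pmul q x)" using add inV_fin fin_pmul fx by blast+
  show ?case using add fp inV_fin unfolding e by (simp add: lin_add algebra_simps)
next
  case (scale p a)
  have e: "pmul (\<lambda>w. a * p w) x = (\<lambda>w. a * pmul p x w)" by (rule ext, rule pmul_scale_left)
  show ?case using scale unfolding e by (simp add: lin_scale)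
qed

lemma pmul_add_left_fun: "pmul (\<lambda>w. f w + g w) r = (\<lambda>w. pmul f r w + pmul g r w)"
  by (rule ext, rule pmul_add_left)
lemma pmul_add_right_fun: "pmul r (\<lambda>w. f w + g w) = (\<lambda>w. pmul r f w + pmul r g w)"
  by (rule ext, rule pmul_add_right)
lemma pmul_scale_left_fun: "pmul (\<lambda>w. a * f w) r = (\<lambda>w. a * pmul f r w)"
  by (rule ext, rule pmul_scale_left)
lemma pmul_scale_right_fun: "pmul r (\<lambda>w. a * f w) = (\<lambda>w. a * pmul r f w)"
  by (rule ext, rule pmul_scale_right)

lemma prepend_eq: "pmul a q = (\<lambda>w. pmul (Qop \<psi> a) q w + lin \<psi> a * q w)"
proof -
  have "a = (\<lambda>w. Qop \<psi> a w + lin \<psi> a * pone w)" by (rule ext, rule split_center)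
  then have "pmul a q = pmul (\<lambda>w. Qop \<psi> a w + lin \<psi> a * pone w) q" by simp
  also have "\<dots> = (\<lambda>w. pmul (Qop \<psi> a) q w + lin \<psi> a * q w)"
    by (simp add: pmul_add_left_fun pmul_scale_left_fun)
  finally show ?thesis .
qed

lemma gen_mult:
  assumes cf: "c_free \<phi> \<psi>" and u\<psi>: "unital \<psi>"
    and g: "us \<noteq> []" "alt b us" "(if even (length us - 1) then b else \<not> b) = E" "\<forall>u\<in>set us. lin \<psi> u = 0"
    and a: "in_alg c a" and ex: "\<not> (c = E \<and> length us = 1)"
  shows "inV \<psi> E (pmul a (pprod us))"
proof -
  obtain u us' where us: "us = u # us'" using g(1) by (cases us) auto
  obtain m where m: "length us = Suc m" using us by simp
  have fa: "fin a" using a in_alg_fin by blast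
  show ?thesis
  proof (cases "c = b")
    case False
    then have cb: "c = (\<not> b)" by auto
    have "inV \<psi> E (pprod (Qop \<psi> a # us))"
    proof (rule inV.gen[where b="\<not> b"])
      show "alt (\<not> b) (Qop \<psi> a # us)" using g a cb by (simp add: alt_Cons in_alg_Qop)
      show "(if even (length (Qop \<psi> a # us) - 1) then \<not> b else \<not> \<not> b) = E"
        using g(3) m by (cases "even m") auto
      show "\<forall>u\<in>set (Qop \<psi> a # us). lin \<psi> u = 0" using g(4) lin_Qop[OF u\<psi> fa] by simp
    qed simp
    moreover have "inV \<psi> E (pprod us)" using inV.gen[OF g] .
    ultimately show ?thesis
      by (subst prepend_eq[of _ _ \<psi>]) (auto intro: inV.add inV.scale)
  next
    case True
    have us'ne: "us' \<noteq> []"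
    proof
      assume "us' = []"
      then have "length us = 1" "b = E" using g(3) us by auto
      then show False using ex True by simp
    qed
    have ua: "in_alg b u" "alt (\<not> b) us'" using g(2) us by (auto simp: alt_Cons)
    have fu: "fin u" using ua in_alg_fin by blast
    have au: "in_alg b (pmul a u)" using in_alg_pmul a True ua by simp
    have e: "pmul a (pprod us) = pmul (pmul a u) (pprod us')" by (simp add: us pmul_assoc')
    have m': "length us' = m" using m us by simp
    have mpos: "m \<ge> 1" using us'ne m' by (cases us') auto
    have "inV \<psi> E (pprod (Qop \<psi> (pmul a u) # us'))"
    proof (rule inV.gen[where b="b"])
      show "alt b (Qop \<psi> (pmul a u) # us')" using ua au by (simp add: alt_Cons in_alg_Qop)
      show "(if even (length (Qop \<psi> (pmul a u) # us') - 1) then b else \<not> b) = E"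
        using g(3) m us by simp
      show "\<forall>u\<in>set (Qop \<psi> (pmul a u) # us'). lin \<psi> u = 0"
        using g(4) us lin_Qop[OF u\<psi> fin_pmul[OF fa fu]] by simp
    qed simp
    moreover have "inV \<psi> E (pprod us')"
    proof (rule inV.gen[where b="\<not> b"])
      show "(if even (length us' - 1) then \<not> b else \<not> \<not> b) = E"
        using g(3) m m' mpos by (cases "even m") (auto simp: even_diff_nat)
    qed (use us'ne ua g(4) us in auto)
    ultimately show ?thesis
      unfolding e by (subst prepend_eq[of _ _ \<psi>]) (auto intro: inV.add inV.scale)
  qed
qed

lemma V2a: assumes cf: "c_free \<phi> \<psi>" and u\<psi>: "unital \<psi>" and a: "in_alg (\<not> E) a"
  shows "inV \<psi> E p \<Longrightarrow> inV \<psi> E (pmul a p)"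
proof (induction rule: inV.induct)
  case (gen us b) then show ?case using gen_mult[OF cf u\<psi> gen(1-4) a] by simp
next
  case zero then show ?case by (simp add: inV.zero)
next
  case (add p q) then show ?case by (simp add: pmul_add_right_fun inV.add)
next
  case (scale p c) then show ?case by (simp add: pmul_scale_right_fun inV.scale)
qed

lemma V2b: assumes cf: "c_free \<phi> \<psi>" and u\<psi>: "unital \<psi>" and a: "in_alg E a"
  shows "inV \<psi> E p \<Longrightarrow> inV \<psi> E (Qop \<psi> (pmul a p))"
proof (induction rule: inV.induct)
  case (gen us b)
  show ?case
  proof (cases "length us = 1")
    case True
    then obtain u where us: "us = [u]" by (cases us) (auto simp: length_Suc_conv)
    have "b = E" using gen(3) us by simp
    then have ua: "in_alg E u" using gen(2) us by (simp add: alt_Cons)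
    have fu: "fin u" using ua in_alg_fin by blast
    have "inV \<psi> E (pprod [Qop \<psi> (pmul a u)])"
    proof (rule inV.gen[where b=E])
      show "alt E [Qop \<psi> (pmul a u)]" using ua a by (simp add: alt_Cons in_alg_Qop in_alg_pmul)
      show "\<forall>v\<in>set [Qop \<psi> (pmul a u)]. lin \<psi> v = 0"
        using lin_Qop[OF u\<psi> fin_pmul[OF in_alg_fin[OF a] fu]] by simp
    qed simp_all
    then show ?thesis using us by simp
  next
    case False
    have "inV \<psi> E (pmul a (pprod us))" using gen_mult[OF cf u\<psi> gen(1-4) a] False by simp
    then show ?thesis using V1[OF cf] Qop_lin0 by metis
  qed
next
  case zero
  have "Qop \<psi> (pmul a (\<lambda>_. 0)) = (\<lambda>_. 0)" by (simp add: Qop_def)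
  then show ?case by (simp add: inV.zero)
next
  case (add p q)
  have f: "fin (pmul a p)" "fin (pmul a q)" using add(1,2) inV_fin fin_pmul in_alg_fin[OF a] by blast+
  show ?case using add by (simp add: pmul_add_right_fun Qop_add[OF f] inV.add)
next
  case (scale p c) then show ?case by (simp add: pmul_scale_right_fun Qop_scale inV.scale)
qed

lemma V0: assumes u\<psi>: "unital \<psi>" and x: "in_alg E x" shows "inV \<psi> E (Qop \<psi> x)"
proof -
  have "inV \<psi> E (pprod [Qop \<psi> x])"
    by (rule inV.gen[where b=E]) (use x lin_Qop[OF u\<psi> in_alg_fin[OF x]] in \<open>auto simp: alt_Cons in_alg_Qop\<close>)
  then show ?thesis by simp
qed

(* Boolean cumulants via nested centering *)
fun Ufor :: "(bool list \<Rightarrow> complex) \<Rightarrow> bool list list \<Rightarrow> ncpoly" where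
  "Ufor \<theta> [] = pone"
| "Ufor \<theta> [a] = mon a"
| "Ufor \<theta> (a # b # as) = pmul (mon a) (Qop \<theta> (Ufor \<theta> (b # as)))"

lemma fin_Ufor: "fin (Ufor \<theta> as)"
  by (induction \<theta> as rule: Ufor.induct) (simp_all add: fin_pmul fin_Qop)

lemma Ufor_Cons: "bs \<noteq> [] \<Longrightarrow> Ufor \<theta> (a # bs) = pmul (mon a) (Qop \<theta> (Ufor \<theta> bs))"
  by (cases bs) auto

lemma pmul_mono_gen: "pmul (mon u) q w = (if take (length u) w = u then q (drop (length u) w) else 0)"
proof (induction u arbitrary: w)
  case Nil then show ?case by (simp add: pone_monoo[symmetric])
next
  case (Cons c u)
  show ?case
  proof (cases w)
    case Nil then show ?thesis by (simp add: mon_def)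
  next
    case (Cons d w')
    have e: "(\<lambda>x. mon (c # u) (d # x)) = (\<lambda>x. if d = c then mon u x else 0)"
      by (auto simp: mon_def)
    have "pmul (mon (c#u)) q w = (if d = c then pmul (mon u) q w' else 0)"
      unfolding Cons pmul_Cons e by (simp add: mon_def)
    then show ?thesis using Cons.IH[of w'] Cons by auto
  qed
qed

lemma pmul_mono_mono: "pmul (mon u) (mon v) = mon (u @ v)"
proof
  fix w show "pmul (mon u) (mon v) w = mon (u @ v) w"
  proof -
    have "pmul (mon u) (mon v) w = (if take (length u) w = u then mon v (drop (length u) w) else 0)"
      by (rule pmul_mono_gen)
    also have "\<dots> = mon (u @ v) w" using append_eq_conv_conj[of u v w] by (auto simp: mon_def)
    finally show ?thesis .
  qed
qed

lemma mono_concat: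
  assumes u: "unital \<theta>"
  shows "as \<noteq> [] \<Longrightarrow> mon (concat as) w =
     (\<Sum>j\<in>{1..length as}. \<theta> (concat (drop j as)) * Ufor \<theta> (take j as) w)"
proof (induction as arbitrary: w)
  case Nil then show ?case by simp
next
  case (Cons a as)
  show ?case
  proof (cases "as = []")
    case True then show ?thesis using u by (simp add: unital_def)
  next
    case False
    let ?n = "length as"
    have IH: "mon (concat as) = (\<lambda>w. \<Sum>j\<in>{1..?n}. \<theta> (concat (drop j as)) * Ufor \<theta> (take j as) w)"
      using Cons.IH[OF False] by (rule ext)
    have tk: "j \<in> {1..?n} \<Longrightarrow> take j as \<noteq> []" for j using False by auto
    have "mon (concat (a # as)) w = pmul (mon a) (mon (concat as)) w"
      by (simp add: pmul_mono_mono)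
    also have "\<dots> = (\<Sum>j\<in>{1..?n}. \<theta> (concat (drop j as)) * pmul (mon a) (Ufor \<theta> (take j as)) w)"
      unfolding IH by (simp add: pmul_sum_right pmul_scale_right)
    also have "\<dots> = (\<Sum>j\<in>{1..?n}. \<theta> (concat (drop j as)) * (Ufor \<theta> (a # take j as) w
                    + lin \<theta> (Ufor \<theta> (take j as)) * mon a w))"
    proof (rule sum.cong[OF refl])
      fix j assume j: "j \<in> {1..?n}"
      have "pmul (mon a) (Ufor \<theta> (take j as)) w
         = pmul (mon a) (\<lambda>w. Qop \<theta> (Ufor \<theta> (take j as)) w + lin \<theta> (Ufor \<theta> (take j as)) * pone w) w"
        by (metis split_center)
      also have "\<dots> = Ufor \<theta> (a # take j as) w + lin \<theta> (Ufor \<theta> (take j as)) * mon a w"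
        using Ufor_Cons[OF tk[OF j]] by (simp add: pmul_add_right pmul_scale_right)
      finally show "\<theta> (concat (drop j as)) * pmul (mon a) (Ufor \<theta> (take j as)) w =
           \<theta> (concat (drop j as)) * (Ufor \<theta> (a # take j as) w + lin \<theta> (Ufor \<theta> (take j as)) * mon a w)"
        by simp
    qed
    also have "\<dots> = (\<Sum>j\<in>{1..?n}. \<theta> (concat (drop j as)) * Ufor \<theta> (a # take j as) w)
        + (\<Sum>j\<in>{1..?n}. \<theta> (concat (drop j as)) * lin \<theta> (Ufor \<theta> (take j as))) * mon a w"
      by (simp add: algebra_simps sum.distrib sum_distrib_right sum_distrib_left)
    also have "(\<Sum>j\<in>{1..?n}. \<theta> (concat (drop j as)) * lin \<theta> (Ufor \<theta> (take j as))) = \<theta> (concat as)"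
    proof -
      have "\<theta> (concat as) = lin \<theta> (mon (concat as))" by simp
      also have "\<dots> = (\<Sum>j\<in>{1..?n}. lin \<theta> (\<lambda>w. \<theta> (concat (drop j as)) * Ufor \<theta> (take j as) w))"
        unfolding IH by (rule lin_sum) (auto intro: fin_scale fin_Ufor)
      finally show ?thesis by (simp add: lin_scale)
    qed
    finally have L: "mon (concat (a # as)) w = (\<Sum>j\<in>{1..?n}. \<theta> (concat (drop j as)) * Ufor \<theta> (a # take j as) w)
        + \<theta> (concat as) * mon a w" .
    have R: "(\<Sum>j\<in>{1..length (a#as)}. \<theta> (concat (drop j (a#as))) * Ufor \<theta> (take j (a#as)) w)
       = \<theta> (concat as) * mon a w + (\<Sum>j\<in>{1..?n}. \<theta> (concat (drop j as)) * Ufor \<theta> (a # take j as) w)"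
    proof -
      have "{1..length (a#as)} = insert 1 {Suc 1..Suc ?n}" using False by auto
      then have "(\<Sum>j\<in>{1..length (a#as)}. \<theta> (concat (drop j (a#as))) * Ufor \<theta> (take j (a#as)) w)
          = \<theta> (concat as) * mon a w + (\<Sum>j\<in>{Suc 1..Suc ?n}. \<theta> (concat (drop j (a#as))) * Ufor \<theta> (take j (a#as)) w)"
        by simp
      also have "(\<Sum>j\<in>{Suc 1..Suc ?n}. \<theta> (concat (drop j (a#as))) * Ufor \<theta> (take j (a#as)) w)
          = (\<Sum>j\<in>{1..?n}. \<theta> (concat (drop j as)) * Ufor \<theta> (a # take j as) w)"
        by (subst sum.atLeast_Suc_atMost_Suc_shift) simp
      finally show ?thesis .
    qed
    show ?thesis using L R by simp
  qed
qed

lemma bcum_Ufor: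
  assumes u: "unital \<theta>"
  shows "as \<noteq> [] \<Longrightarrow> bcum \<theta> as = lin \<theta> (Ufor \<theta> as)"
proof (induction "length as" arbitrary: as rule: less_induct)
  case less
  let ?n = "length as"
  have n1: "?n \<ge> 1" using less.prems by (cases as) auto
  have "\<theta> (concat as) = lin \<theta> (mon (concat as))" by simp
  also have "\<dots> = lin \<theta> (\<lambda>w. \<Sum>j\<in>{1..?n}. \<theta> (concat (drop j as)) * Ufor \<theta> (take j as) w)"
    using mono_concat[OF u less.prems] by (metis)
  also have "\<dots> = (\<Sum>j\<in>{1..?n}. \<theta> (concat (drop j as)) * lin \<theta> (Ufor \<theta> (take j as)))"
    by (subst lin_sum) (auto intro: fin_scale fin_Ufor simp: lin_scale)
  also have "\<dots> = (\<Sum>j\<in>{1..<?n}. \<theta> (concat (drop j as)) * lin \<theta> (Ufor \<theta> (take j as))) + lin \<theta> (Ufor \<theta> as)"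
  proof -
    have "{1..?n} = insert ?n {1..<?n}" using n1 by auto
    then show ?thesis using u by (simp add: unital_def add.commute)
  qed
  also have "(\<Sum>j\<in>{1..<?n}. \<theta> (concat (drop j as)) * lin \<theta> (Ufor \<theta> (take j as)))
      = (\<Sum>k\<in>{1..<?n}. bcum \<theta> (take k as) * \<theta> (concat (drop k as)))"
  proof (rule sum.cong[OF refl])
    fix k assume k: "k \<in> {1..<?n}"
    then have "take k as \<noteq> []" "length (take k as) < ?n" using less.prems by auto
    then show "\<theta> (concat (drop k as)) * lin \<theta> (Ufor \<theta> (take k as)) = bcum \<theta> (take k as) * \<theta> (concat (drop k as))"
      using less.hyps by simp
  qed
  finally have "\<theta> (concat as) = (\<Sum>k\<in>{1..<?n}. bcum \<theta> (take k as) * \<theta> (concat (drop k as))) + lin \<theta> (Ufor \<theta> as)" .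
  then show ?case using less.prems by (subst bcum.simps) simp
qed

definition sg :: "bool list \<Rightarrow> bool list list" where "sg w = map (\<lambda>c. [c]) w"

definition Nq :: "(bool list \<Rightarrow> complex) \<Rightarrow> bool list \<Rightarrow> ncpoly" where
  "Nq \<theta> g = Qop \<theta> (Ufor \<theta> (sg g))"

lemma sg_simps[simp]: "sg [] = []" "sg (c # g) = [c] # sg g" "sg g = [] \<longleftrightarrow> g = []"
  by (auto simp: sg_def)

lemma Nq_single: "Nq \<theta> [c] = Qop \<theta> (mon [c])" by (simp add: Nq_def)
lemma Nq_Cons: "g \<noteq> [] \<Longrightarrow> Nq \<theta> (c # g) = Qop \<theta> (pmul (mon [c]) (Nq \<theta> g))"
  by (simp add: Nq_def Ufor_Cons)
lemma fin_Nq: "fin (Nq \<theta> g)" by (simp add: Nq_def fin_Qop fin_Ufor)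

lemma bcum_sg_Cons: "unital \<theta> \<Longrightarrow> g \<noteq> [] \<Longrightarrow> bcum \<theta> (sg (c # g)) = lin \<theta> (pmul (mon [c]) (Nq \<theta> g))"
  by (simp add: bcum_Ufor Ufor_Cons Nq_def)
lemma bcum_sg_single: "bcum \<theta> (sg [c]) = \<theta> [c]"
  by (subst bcum.simps) simp

definition EE :: "(bool list \<Rightarrow> complex) \<Rightarrow> bool \<Rightarrow> ncpoly" where
  "EE \<psi> L w = (if w \<noteq> [] \<and> hd w = L \<and> last w = L then bcum \<psi> (sg w) else 0)"

function ginv :: "ncpoly \<Rightarrow> bool list \<Rightarrow> complex" where
  "ginv e w = (if w = [] then 1 else (\<Sum>j\<in>{1..length w}. e (take j w) * ginv e (drop j w)))"
  by pat_completeness auto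
termination by (relation "Wellfounded.measure (\<lambda>(e, w). length w)") auto

declare ginv.simps[simp del]

lemma pmul_first0: "e [] = 0 \<Longrightarrow> pmul e f w = (\<Sum>j\<in>{1..length w}. e (take j w) * f (drop j w))"
  unfolding pmul_def by (simp add: sum.atMost_shift sum.atLeast1_atMost_eq)

lemma ginv_eq: "e [] = 0 \<Longrightarrow> ginv e w = pone w + pmul e (ginv e) w"
  by (subst ginv.simps) (auto simp: pmul_first0 pone_def)

lemma ginv_rinv: "e [] = 0 \<Longrightarrow> pmul (\<lambda>w. pone w - e w) (ginv e) = pone"
proof
  fix w assume e: "e [] = 0"
  have "pmul (\<lambda>w. pone w - e w) (ginv e) w = ginv e w - pmul e (ginv e) w"
    by (simp add: pmul_diff_left)
  then show "pmul (\<lambda>w. pone w - e w) (ginv e) w = pone w" using ginv_eq[of e w] e by simp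
qed

lemma ginv_Nil[simp]: "ginv e [] = 1" by (subst ginv.simps) simp

lemma two_sided:
  assumes pg: "pmul p g = pone" and gh: "pmul g h = pone"
  shows "pmul g p = pone"
proof -
  have "p = pmul p (pmul g h)" using gh by simp
  also have "\<dots> = pmul (pmul p g) h" by (simp add: pmul_assoc')
  also have "\<dots> = h" using pg by simp
  finally show ?thesis using gh by simp
qed

lemma ginv_linv: assumes e: "e [] = 0" shows "pmul (ginv e) (\<lambda>w. pone w - e w) = pone"
proof -
  let ?g = "ginv e"
  let ?e' = "\<lambda>w. pone w - ?g w"
  have e': "?e' [] = 0" by (simp add: pone_def)
  have g': "(\<lambda>w. pone w - ?e' w) = ?g" by simp
  have "pmul ?g (ginv ?e') = pone" using ginv_rinv[of ?e'] e' g' by simp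
  then show ?thesis using two_sided[OF ginv_rinv[of e]] e by blast
qed

fun pw :: "ncpoly \<Rightarrow> nat \<Rightarrow> ncpoly" where
  "pw P 0 = pone"
| "pw P (Suc k) = pmul P (pw P k)"

definition Gs :: "(bool list \<Rightarrow> complex) \<Rightarrow> bool \<Rightarrow> ncpoly" where
  "Gs \<psi> E = ginv (EE \<psi> E)"
definition Cs :: "(bool list \<Rightarrow> complex) \<Rightarrow> bool \<Rightarrow> ncpoly" where
  "Cs \<psi> T = pmul (Gs \<psi> (\<not> T)) (mon [T])"
definition ck :: "(bool list \<Rightarrow> complex) \<Rightarrow> bool \<Rightarrow> nat \<Rightarrow> ncpoly" where
  "ck \<psi> T k = pmul (pw (Cs \<psi> T) k) (Gs \<psi> (\<not> T))"
definition xs :: "(bool list \<Rightarrow> complex) \<Rightarrow> bool \<Rightarrow> nat \<Rightarrow> ncpoly" where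
  "xs \<theta> T k = Nq \<theta> (replicate (Suc k) T)"
definition Av :: "(bool list \<Rightarrow> complex) \<Rightarrow> (bool list \<Rightarrow> complex) \<Rightarrow> bool \<Rightarrow> bool list \<Rightarrow> ncpoly" where
  "Av \<psi> \<theta> T v = (\<lambda>w. \<Sum>k\<le>length v. ck \<psi> T k v * xs \<theta> T k w)"
definition Nv :: "(bool list \<Rightarrow> complex) \<Rightarrow> bool \<Rightarrow> bool list \<Rightarrow> ncpoly" where
  "Nv \<psi> E g = (if g = [] then pone else if last g = E then Nq \<psi> g else pzero)"

lemma EE_Nil[simp]: "EE \<psi> L [] = 0" by (simp add: EE_def)

lemma Gs_eq: "Gs \<psi> E w = pone w + pmul (EE \<psi> E) (Gs \<psi> E) w"
  unfolding Gs_def by (rule ginv_eq) simp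

lemma pmul_EE_Cons: "pmul (EE \<psi> E) f (c # u) = (\<Sum>j\<le>length u. EE \<psi> E (c # take j u) * f (drop j u))"
  unfolding pmul_Cons by (simp add: pmul_def)

lemma pmul_EE_T: "T \<noteq> E \<Longrightarrow> pmul (EE \<psi> E) f (T # u) = 0"
  by (simp add: pmul_EE_Cons EE_def)

lemma pmul_monT_Cons: "pmul (mon [T]) f (c # u) = (if c = T then f u else 0)"
  by (simp add: pmul_mono_Cons)

lemma ck_Suc: "ck \<psi> T (Suc k) w = pmul (mon [T]) (ck \<psi> T k) w + pmul (EE \<psi> (\<not> T)) (ck \<psi> T (Suc k)) w"
proof -
  let ?G = "Gs \<psi> (\<not> T)" and ?E = "EE \<psi> (\<not> T)"
  have G: "?G = (\<lambda>w. pone w + pmul ?E ?G w)" using Gs_eq by (rule ext)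
  have "ck \<psi> T (Suc k) = pmul (Cs \<psi> T) (ck \<psi> T k)" by (simp add: ck_def pmul_assoc')
  also have "\<dots> = pmul ?G (pmul (mon [T]) (ck \<psi> T k))" by (simp add: Cs_def pmul_assoc')
  also have "\<dots> = (\<lambda>w. pmul (mon [T]) (ck \<psi> T k) w + pmul ?E (pmul ?G (pmul (mon [T]) (ck \<psi> T k))) w)"
    by (subst G) (simp add: pmul_add_left_fun pmul_assoc')
  finally have e: "ck \<psi> T (Suc k) = (\<lambda>w. pmul (mon [T]) (ck \<psi> T k) w + pmul ?E (pmul ?G (pmul (mon [T]) (ck \<psi> T k))) w)" .
  have "pmul ?G (pmul (mon [T]) (ck \<psi> T k)) = ck \<psi> T (Suc k)"
    by (simp add: ck_def Cs_def pmul_assoc')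
  then show ?thesis using e by metis
qed

lemma ck_0: "ck \<psi> T 0 = Gs \<psi> (\<not> T)" by (simp add: ck_def)

lemma ck_Nil: "ck \<psi> T k [] = (if k = 0 then 1 else 0)"
proof (cases k)
  case 0 then show ?thesis by (simp add: ck_0 Gs_def)
next
  case (Suc k') then show ?thesis using ck_Suc[of \<psi> T k' "[]"] by (simp add: mon_def)
qed

lemma ck_T: "ck \<psi> T k (T # u) = (if k = 0 then 0 else ck \<psi> T (k - 1) u)"
proof (cases k)
  case 0 then show ?thesis using Gs_eq[of \<psi> "\<not> T" "T # u"] pmul_EE_T[of T "\<not> T"]
    by (simp add: ck_0 pone_def)
next
  case (Suc k') then show ?thesis using ck_Suc[of \<psi> T k' "T # u"] pmul_EE_T[of T "\<not> T"]
    by (simp add: pmul_monT_Cons)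
qed

lemma ck_E: "ck \<psi> T k ((\<not> T) # u) = (\<Sum>j\<le>length u. EE \<psi> (\<not> T) ((\<not> T) # take j u) * ck \<psi> T k (drop j u))"
proof (cases k)
  case 0 then show ?thesis using Gs_eq[of \<psi> "\<not> T" "(\<not> T) # u"]
    by (simp add: ck_0 pone_def pmul_EE_Cons)
next
  case (Suc k') then show ?thesis using ck_Suc[of \<psi> T k' "(\<not> T) # u"]
    by (simp add: pmul_monT_Cons pmul_EE_Cons)
qed

lemma ck_vanish: "length v < k \<Longrightarrow> ck \<psi> T k v = 0"
proof (induction "length v" arbitrary: v k rule: less_induct)
  case less
  show ?case
  proof (cases v)
    case Nil then show ?thesis using less.prems by (simp add: ck_Nil)
  next
    case (Cons c u)
    show ?thesis
    proof (cases "c = T")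
      case True
      then show ?thesis using less Cons by (simp add: ck_T)
    next
      case False
      then have c: "c = (\<not> T)" by simp
      have "ck \<psi> T k (c # u) = (\<Sum>j\<le>length u. EE \<psi> (\<not> T) ((\<not> T) # take j u) * ck \<psi> T k (drop j u))"
        using ck_E[of \<psi> T k u] c by simp
      also have "\<dots> = 0"
        by (rule sum.neutral) (use less Cons in auto)
      finally show ?thesis using Cons by simp
    qed
  qed
qed

locale cfp =
  fixes \<phi> \<psi> :: "bool list \<Rightarrow> complex"
  assumes cf: "c_free \<phi> \<psi>" and u\<phi>: "unital \<phi>" and u\<psi>: "unital \<psi>"
begin

lemma uth: "\<theta> = \<phi> \<or> \<theta> = \<psi> \<Longrightarrow> unital \<theta>" using u\<phi> u\<psi> by auto

lemma V3': "\<theta> = \<phi> \<or> \<theta> = \<psi> \<Longrightarrow> inV \<psi> E p \<Longrightarrow> in_alg (\<not> E) x \<Longrightarrow> lin \<theta> x = 0 \<Longrightarrow> lin \<theta> (pmul p x) = 0"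
  using V3[OF cf u\<phi> u\<psi>, of E x p] by auto

lemma Nv_inV: "g \<noteq> [] \<Longrightarrow> inV \<psi> E (Nv \<psi> E g)"
proof (induction g)
  case Nil then show ?case by simp
next
  case (Cons c g)
  show ?case
  proof (cases "g = []")
    case True
    show ?thesis
    proof (cases "c = E")
      case True
      then show ?thesis using \<open>g = []\<close> V0[OF u\<psi>, of E "mon [E]"] by (simp add: Nv_def Nq_single)
    next
      case False
      then show ?thesis using \<open>g = []\<close> by (simp add: Nv_def)
    qed
  next
    case False
    show ?thesis
    proof (cases "last g = E")
      case True
      have IH: "inV \<psi> E (Nq \<psi> g)" using Cons.IH False True by (simp add: Nv_def)
      have e: "Nv \<psi> E (c # g) = Qop \<psi> (pmul (mon [c]) (Nq \<psi> g))"
        using False True by (simp add: Nv_def Nq_Cons)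
      show ?thesis
      proof (cases "c = E")
        case True
        then show ?thesis unfolding e using V2b[OF cf u\<psi> _ IH] by simp
      next
        case False
        then have "c = (\<not> E)" by auto
        then have "in_alg (\<not> E) (mon [c])" by simp
        then have "inV \<psi> E (pmul (mon [c]) (Nq \<psi> g))" using V2a[OF cf u\<psi> _ IH] by simp
        then show ?thesis unfolding e using V1[OF cf] Qop_lin0 by metis
      qed
    next
      case False
      then show ?thesis using \<open>g \<noteq> []\<close> by (simp add: Nv_def)
    qed
  qed
qed

lemma fin_Nv: "fin (Nv \<psi> E g)" by (simp add: Nv_def fin_Nq)

lemma KL: "g \<noteq> [] \<or> c = E \<Longrightarrow> pmul (mon [c]) (Nv \<psi> E g) = (\<lambda>w. Nv \<psi> E (c # g) w + EE \<psi> E (c # g) * pone w)"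
proof -
  assume h: "g \<noteq> [] \<or> c = E"
  show ?thesis
  proof (cases "g = []")
    case True
    then have c: "c = E" using h by simp
    show ?thesis unfolding True c
      by (rule ext) (simp add: Nv_def Nq_single EE_def Qop_def bcum_sg_single[simplified])
  next
    case False
    show ?thesis
    proof (cases "last g = E")
      case lE: True
      have Nvg: "Nv \<psi> E g = Nq \<psi> g" using False lE by (simp add: Nv_def)
      have Nvcg: "Nv \<psi> E (c # g) = Qop \<psi> (pmul (mon [c]) (Nq \<psi> g))"
        using False lE by (simp add: Nv_def Nq_Cons)
      have bc: "bcum \<psi> (sg (c # g)) = lin \<psi> (pmul (mon [c]) (Nq \<psi> g))"
        using bcum_sg_Cons[OF u\<psi> False] .
      have EEv: "EE \<psi> E (c # g) = lin \<psi> (pmul (mon [c]) (Nq \<psi> g))"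
      proof (cases "c = E")
        case True then show ?thesis using False lE bc by (simp add: EE_def)
      next
        case cE: False
        have "inV \<psi> E (Nq \<psi> g)" using Nv_inV[OF False, of E] Nvg by simp
        moreover have "c = (\<not> E)" using cE by auto
        then have "in_alg (\<not> E) (mon [c])" by simp
        ultimately have "lin \<psi> (pmul (mon [c]) (Nq \<psi> g)) = 0" using V2a[OF cf u\<psi>] V1[OF cf] by blast
        then show ?thesis using cE by (simp add: EE_def)
      qed
      show ?thesis unfolding Nvg Nvcg EEv by (rule ext) (simp add: Qop_def)
    next
      case False
      then show ?thesis using \<open>g \<noteq> []\<close> by (auto simp: Nv_def EE_def pzero_def)
    qed
  qed
qed

lemma S_KL: "g \<noteq> [] \<or> c = E \<Longrightarrow> pmul (pmul (mon [c]) (Nv \<psi> E g)) A = (\<lambda>w. pmul (Nv \<psi> E (c # g)) A w + EE \<psi> E (c # g) * A w)"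
  by (simp add: KL pmul_add_left_fun pmul_scale_left_fun)

lemma xs_0: "xs \<theta> T 0 = Qop \<theta> (mon [T])" by (simp add: xs_def Nq_single)
lemma xs_Suc: "xs \<theta> T (Suc k) = Qop \<theta> (pmul (mon [T]) (xs \<theta> T k))" by (simp add: xs_def Nq_Cons)
lemma xs_alg: "in_alg T (xs \<theta> T k)"
  by (induction k) (simp_all add: xs_0 xs_Suc in_alg_Qop in_alg_pmul)
lemma xs_fin: "fin (xs \<theta> T k)" by (simp add: xs_def fin_Nq)
lemma xs_lin: "\<theta> = \<phi> \<or> \<theta> = \<psi> \<Longrightarrow> lin \<theta> (xs \<theta> T k) = 0"
  by (simp add: xs_def Nq_def lin_Qop fin_Ufor uth)
lemma sg_rep: "sg (replicate n T) = replicate n [T]" by (simp add: sg_def)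
lemma xs_bcum: "\<theta> = \<phi> \<or> \<theta> = \<psi> \<Longrightarrow> lin \<theta> (pmul (mon [T]) (xs \<theta> T k)) = bcum \<theta> (replicate (Suc (Suc k)) [T])"
  using bcum_sg_Cons[OF uth, of \<theta> "replicate (Suc k) T" T] by (simp add: xs_def sg_rep)

lemma Av_fin: "fin (Av \<psi> \<theta> T v)"
  unfolding Av_def by (intro fin_sum fin_scale) (simp_all add: xs_fin)
lemma Av_alg: "in_alg T (Av \<psi> \<theta> T v)"
  unfolding Av_def by (intro in_alg_sum in_alg_scale) (simp_all add: xs_alg)
lemma Av_lin: "\<theta> = \<phi> \<or> \<theta> = \<psi> \<Longrightarrow> lin \<theta> (Av \<psi> \<theta> T v) = 0"
  unfolding Av_def by (subst lin_sum) (simp_all add: fin_scale xs_fin lin_scale xs_lin)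

lemma Av_Nil: "Av \<psi> \<theta> T [] = xs \<theta> T 0"
  by (simp add: Av_def ck_Nil)

lemma Av_T: "Av \<psi> \<theta> T (T # u) = Qop \<theta> (pmul (mon [T]) (Av \<psi> \<theta> T u))"
proof -
  have "pmul (mon [T]) (Av \<psi> \<theta> T u) = (\<lambda>w. \<Sum>k\<le>length u. ck \<psi> T k u * pmul (mon [T]) (xs \<theta> T k) w)"
    unfolding Av_def by (rule ext) (simp add: pmul_sum_right pmul_scale_right)
  then have "Qop \<theta> (pmul (mon [T]) (Av \<psi> \<theta> T u)) = (\<lambda>w. \<Sum>k\<le>length u. ck \<psi> T k u * xs \<theta> T (Suc k) w)"
    by (simp add: Qop_sum fin_scale fin_pmul xs_fin Qop_scale xs_Suc)
  moreover have "Av \<psi> \<theta> T (T # u) = (\<lambda>w. \<Sum>k\<le>length u. ck \<psi> T k u * xs \<theta> T (Suc k) w)"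
    unfolding Av_def length_Cons sum.atMost_Suc_shift by (simp add: ck_T)
  ultimately show ?thesis by simp
qed

lemma Av_E: "Av \<psi> \<theta> T ((\<not> T) # u) w = (\<Sum>j\<le>length u. EE \<psi> (\<not> T) ((\<not> T) # take j u) * Av \<psi> \<theta> T (drop j u) w)"
proof -
  have "Av \<psi> \<theta> T ((\<not> T) # u) w = (\<Sum>k\<le>Suc (length u). \<Sum>j\<le>length u. EE \<psi> (\<not> T) ((\<not> T) # take j u) * ck \<psi> T k (drop j u) * xs \<theta> T k w)"
    unfolding Av_def by (simp add: ck_E sum_distrib_right)
  also have "\<dots> = (\<Sum>j\<le>length u. EE \<psi> (\<not> T) ((\<not> T) # take j u) * (\<Sum>k\<le>Suc (length u). ck \<psi> T k (drop j u) * xs \<theta> T k w))"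
    by (subst sum.swap) (simp add: sum_distrib_left algebra_simps)
  also have "\<dots> = (\<Sum>j\<le>length u. EE \<psi> (\<not> T) ((\<not> T) # take j u) * Av \<psi> \<theta> T (drop j u) w)"
  proof (rule sum.cong[OF refl])
    fix j assume j: "j \<in> {..length u}"
    have "(\<Sum>k\<le>Suc (length u). ck \<psi> T k (drop j u) * xs \<theta> T k w) = (\<Sum>k\<le>length (drop j u). ck \<psi> T k (drop j u) * xs \<theta> T k w)"
      by (rule sum.mono_neutral_right) (auto simp: ck_vanish)
    then show "EE \<psi> (\<not> T) ((\<not> T) # take j u) * (\<Sum>k\<le>Suc (length u). ck \<psi> T k (drop j u) * xs \<theta> T k w) =
         EE \<psi> (\<not> T) ((\<not> T) # take j u) * Av \<psi> \<theta> T (drop j u) w" by (simp add: Av_def)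
  qed
  finally show ?thesis .
qed

end

context cfp begin

lemma main:
  assumes th: "\<theta> = \<phi> \<or> \<theta> = \<psi>"
  shows "Nq \<theta> (u @ [T]) = (\<lambda>w. \<Sum>j\<le>length u. pmul (Nv \<psi> (\<not> T) (take j u)) (Av \<psi> \<theta> T (drop j u)) w)"
proof (induction u)
  case Nil
  show ?case by (rule ext) (simp add: Nq_single Nv_def Av_Nil xs_0)
next
  case (Cons c u)
  define A where "A j = Av \<psi> \<theta> T (drop j u)" for j
  define g where "g j = take j u" for j
  define P where "P j = pmul (Nv \<psi> (\<not> T) (c # g j)) (A j)" for j
  have finA: "fin (A j)" for j by (simp add: A_def Av_fin)
  have algA: "in_alg T (A j)" for j by (simp add: A_def Av_alg)
  have linA: "lin \<theta> (A j) = 0" for j by (simp add: A_def Av_lin th)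
  have finP: "fin (P j)" for j by (simp add: P_def fin_pmul fin_Nv finA)
  have linP: "lin \<theta> (P j) = 0" for j
  proof -
    have "inV \<psi> (\<not> T) (Nv \<psi> (\<not> T) (c # g j))" by (rule Nv_inV) simp
    moreover have "in_alg (\<not> \<not> T) (A j)" using algA by simp
    ultimately show ?thesis unfolding P_def using V3'[OF th] linA by blast
  qed
  have step: "Nq \<theta> ((c # u) @ [T]) = Qop \<theta> (\<lambda>w. \<Sum>j\<le>length u. pmul (pmul (mon [c]) (Nv \<psi> (\<not> T) (g j))) (A j) w)"
  proof -
    have "Nq \<theta> ((c # u) @ [T]) = Qop \<theta> (pmul (mon [c]) (Nq \<theta> (u @ [T])))" by (simp add: Nq_Cons)
    also have "pmul (mon [c]) (Nq \<theta> (u @ [T])) = (\<lambda>w. \<Sum>j\<le>length u. pmul (pmul (mon [c]) (Nv \<psi> (\<not> T) (g j))) (A j) w)"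
      unfolding Cons.IH by (rule ext) (simp add: pmul_sum_right pmul_assoc' A_def g_def)
    finally show ?thesis .
  qed
  have target: "(\<lambda>w. \<Sum>j\<le>length (c # u). pmul (Nv \<psi> (\<not> T) (take j (c # u))) (Av \<psi> \<theta> T (drop j (c # u))) w)
      = (\<lambda>w. Av \<psi> \<theta> T (c # u) w + (\<Sum>j\<le>length u. P j w))"
    unfolding length_Cons sum.atMost_Suc_shift by (simp add: Nv_def P_def A_def g_def)
  show ?case
  proof (cases "c = T")
    case False
    then have cE: "c = (\<not> T)" by auto
    have tot: "(\<lambda>w. \<Sum>j\<le>length u. pmul (pmul (mon [c]) (Nv \<psi> (\<not> T) (g j))) (A j) w)
        = (\<lambda>w. \<Sum>j\<le>length u. P j w + EE \<psi> (\<not> T) (c # g j) * A j w)"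
      using S_KL[of _ c "\<not> T"] cE by (simp add: P_def)
    have lin0: "lin \<theta> (\<lambda>w. \<Sum>j\<le>length u. P j w + EE \<psi> (\<not> T) (c # g j) * A j w) = 0"
      by (subst lin_sum) (simp_all add: fin_add finP fin_scale finA lin_add lin_scale linP linA)
    have AvE: "Av \<psi> \<theta> T (c # u) w = (\<Sum>j\<le>length u. EE \<psi> (\<not> T) (c # g j) * A j w)" for w
      using Av_E[of \<theta> T u w] cE by (simp add: A_def g_def)
    show ?thesis unfolding step tot Qop_lin0[OF lin0] target
      by (rule ext) (simp add: AvE sum.distrib)
  next
    case True
    have t0: "pmul (pmul (mon [c]) (Nv \<psi> (\<not> T) (g 0))) (A 0) = pmul (mon [T]) (Av \<psi> \<theta> T u)"
      using True by (simp add: g_def Nv_def A_def)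
    have tS: "pmul (pmul (mon [c]) (Nv \<psi> (\<not> T) (g (Suc i)))) (A (Suc i)) = P (Suc i)" if "i < length u" for i
    proof -
      have "g (Suc i) \<noteq> []" using that by (auto simp: g_def)
      then show ?thesis using S_KL[of "g (Suc i)" c "\<not> T" "A (Suc i)"] True by (simp add: P_def EE_def)
    qed
    have tot: "(\<lambda>w. \<Sum>j\<le>length u. pmul (pmul (mon [c]) (Nv \<psi> (\<not> T) (g j))) (A j) w)
       = (\<lambda>w. pmul (mon [T]) (Av \<psi> \<theta> T u) w + (\<Sum>i<length u. P (Suc i) w))"
      unfolding sum.atMost_shift t0 by (rule ext) (simp add: tS)
    have linS: "lin \<theta> (\<lambda>w. \<Sum>i<length u. P (Suc i) w) = 0"
      by (subst lin_sum) (simp_all add: finP linP)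
    have finS: "fin (\<lambda>w. \<Sum>i<length u. P (Suc i) w)" by (rule fin_sum) (simp_all add: finP)
    have Q: "Qop \<theta> (\<lambda>w. pmul (mon [T]) (Av \<psi> \<theta> T u) w + (\<Sum>i<length u. P (Suc i) w))
       = (\<lambda>w. Av \<psi> \<theta> T (T # u) w + (\<Sum>i<length u. P (Suc i) w))"
      by (simp add: Qop_add fin_pmul Av_fin finS Qop_lin0[OF linS] Av_T)
    have P0: "P 0 = (\<lambda>_. 0)" using True by (simp add: P_def Nv_def g_def pzero_def)
    show ?thesis unfolding step tot Q target using True
      by (intro ext) (simp add: sum.atMost_shift P0)
  qed
qed

lemma final:
  assumes th: "\<theta> = \<phi> \<or> \<theta> = \<psi>"
  shows "bcum \<theta> (sg (c # v @ [T])) =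
    (if c = T then (\<Sum>k\<le>length v. ck \<psi> T k v * bcum \<theta> (replicate (Suc (Suc k)) [T])) else 0)"
proof -
  define A where "A j = Av \<psi> \<theta> T (drop j v)" for j
  define g where "g j = take j v" for j
  have finA: "fin (A j)" for j by (simp add: A_def Av_fin)
  have algA: "in_alg T (A j)" for j by (simp add: A_def Av_alg)
  have linA: "lin \<theta> (A j) = 0" for j by (simp add: A_def Av_lin th)
  define S where "S j = pmul (pmul (mon [c]) (Nv \<psi> (\<not> T) (g j))) (A j)" for j
  have finS: "fin (S j)" for j by (simp add: S_def fin_pmul fin_Nv finA)
  have linS: "lin \<theta> (S j) = 0" if "g j \<noteq> [] \<or> c = (\<not> T)" for j
  proof -
    have "inV \<psi> (\<not> T) (Nv \<psi> (\<not> T) (c # g j))" by (rule Nv_inV) simp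
    moreover have "in_alg (\<not> \<not> T) (A j)" using algA by simp
    ultimately have "lin \<theta> (pmul (Nv \<psi> (\<not> T) (c # g j)) (A j)) = 0" using V3'[OF th] linA by blast
    then show ?thesis unfolding S_def S_KL[OF that]
      by (simp add: lin_add fin_pmul fin_Nv finA fin_scale lin_scale linA)
  qed
  have "bcum \<theta> (sg (c # v @ [T])) = lin \<theta> (pmul (mon [c]) (Nq \<theta> (v @ [T])))"
    using bcum_sg_Cons[OF uth[OF th], of "v @ [T]" c] by simp
  also have "pmul (mon [c]) (Nq \<theta> (v @ [T])) = (\<lambda>w. \<Sum>j\<le>length v. S j w)"
    unfolding main[OF th] by (rule ext) (simp add: pmul_sum_right pmul_assoc' S_def A_def g_def)
  also have "lin \<theta> (\<lambda>w. \<Sum>j\<le>length v. S j w) = (\<Sum>j\<le>length v. lin \<theta> (S j))"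
    by (rule lin_sum) (simp_all add: finS)
  finally have b: "bcum \<theta> (sg (c # v @ [T])) = (\<Sum>j\<le>length v. lin \<theta> (S j))" .
  show ?thesis
  proof (cases "c = T")
    case False
    then have "c = (\<not> T)" by auto
    then show ?thesis using b linS False by simp
  next
    case True
    have z: "\<forall>i<length v. lin \<theta> (S (Suc i)) = 0"
    proof (intro allI impI)
      fix i assume "i < length v"
      then have "g (Suc i) \<noteq> []" by (auto simp: g_def)
      then show "lin \<theta> (S (Suc i)) = 0" using linS by blast
    qed
    have "(\<Sum>j\<le>length v. lin \<theta> (S j)) = lin \<theta> (S 0)"
      unfolding sum.atMost_shift using z by simp
    also have "S 0 = pmul (mon [T]) (Av \<psi> \<theta> T v)" using True by (simp add: S_def g_def Nv_def A_def)
    also have "pmul (mon [T]) (Av \<psi> \<theta> T v) = (\<lambda>w. \<Sum>k\<le>length v. ck \<psi> T k v * pmul (mon [T]) (xs \<theta> T k) w)"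
      unfolding Av_def by (rule ext) (simp add: pmul_sum_right pmul_scale_right)
    also have "lin \<theta> \<dots> = (\<Sum>k\<le>length v. ck \<psi> T k v * bcum \<theta> (replicate (Suc (Suc k)) [T]))"
      by (subst lin_sum) (simp_all add: fin_scale fin_pmul xs_fin lin_scale xs_bcum th)
    finally show ?thesis using b True by simp
  qed
qed

end

definition Dd :: "(bool list \<Rightarrow> complex) \<Rightarrow> ncpoly" where
  "Dd \<psi> w = (if w = [] then 0 else bcum \<psi> (sg w))"

definition bd :: "bool list \<Rightarrow> nat \<Rightarrow> bool" where
  "bd w j \<longleftrightarrow> drop j w = [] \<or> last (take j w) \<noteq> hd (drop j w)"

definition Cand :: "(bool list \<Rightarrow> complex) \<Rightarrow> bool \<Rightarrow> ncpoly" where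
  "Cand \<psi> L u = Gs \<psi> L u + Gs \<psi> (\<not> L) u - pone u"

lemma concat_sg[simp]: "concat (sg w) = w" by (induction w) auto
lemma take_sg: "take k (sg w) = sg (take k w)" by (simp add: sg_def take_map)
lemma drop_sg: "drop k (sg w) = sg (drop k w)" by (simp add: sg_def drop_map)
lemma length_sg[simp]: "length (sg w) = length w" by (simp add: sg_def)

lemma pmul_split0: "pmul f g w = f [] * g w + (\<Sum>j\<in>{1..length w}. f (take j w) * g (drop j w))"
  unfolding pmul_def by (simp add: sum.atMost_shift sum.atLeast1_atMost_eq)

lemma mom_a: assumes u: "unital \<psi>" shows "\<psi> w = pone w + pmul (Dd \<psi>) \<psi> w"
proof (cases "w = []")
  case True then show ?thesis using u by (simp add: unital_def pone_def Dd_def)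
next
  case False
  let ?n = "length w"
  have n1: "?n \<ge> 1" using False by (cases w) auto
  have "bcum \<psi> (sg w) = \<psi> w - (\<Sum>k\<in>{1..<?n}. bcum \<psi> (sg (take k w)) * \<psi> (drop k w))"
    using False by (subst bcum.simps) (simp add: take_sg drop_sg)
  moreover have "(\<Sum>k\<in>{1..<?n}. bcum \<psi> (sg (take k w)) * \<psi> (drop k w)) = (\<Sum>k\<in>{1..<?n}. Dd \<psi> (take k w) * \<psi> (drop k w))"
    by (rule sum.cong) (auto simp: Dd_def)
  moreover have "pmul (Dd \<psi>) \<psi> w = (\<Sum>k\<in>{1..<?n}. Dd \<psi> (take k w) * \<psi> (drop k w)) + Dd \<psi> w"
  proof -
    have "{1..?n} = insert ?n {1..<?n}" using n1 by auto
    then show ?thesis using u by (simp add: pmul_split0 Dd_def unital_def add.commute)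
  qed
  ultimately show ?thesis using False by (simp add: pone_def Dd_def)
qed

lemma Gs_supp: "Gs \<psi> E u \<noteq> 0 \<Longrightarrow> u = [] \<or> (hd u = E \<and> last u = E)"
proof (induction "length u" arbitrary: u rule: less_induct)
  case less
  show ?case
  proof (cases "u = []")
    case True then show ?thesis by simp
  next
    case False
    have "Gs \<psi> E u = (\<Sum>j\<in>{1..length u}. EE \<psi> E (take j u) * Gs \<psi> E (drop j u))"
      using Gs_eq[of \<psi> E u] False by (simp add: pmul_split0 pone_def)
    then obtain j where j: "j \<in> {1..length u}" "EE \<psi> E (take j u) \<noteq> 0" "Gs \<psi> E (drop j u) \<noteq> 0"
      using less.prems by (metis (no_types, lifting) mult_eq_0_iff sum.neutral)
    have tj: "take j u \<noteq> []" "hd (take j u) = E" "last (take j u) = E" using j(2) by (auto simp: EE_def split: if_splits)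
    have "drop j u = [] \<or> (hd (drop j u) = E \<and> last (drop j u) = E)"
      using less.hyps[of "drop j u"] j by auto
    then have "last u = E"
    proof (cases "drop j u = []")
      case True
      then have "take j u = u" by simp
      then show ?thesis using tj by simp
    next
      case False
      assume d: "drop j u = [] \<or> (hd (drop j u) = E \<and> last (drop j u) = E)"
      then have "last (drop j u) = E" using False by simp
      moreover have "last u = last (drop j u)" using False by (metis append_take_drop_id last_appendR)
      ultimately show ?thesis by simp
    qed
    moreover have "hd u = E" using tj j by (metis append_take_drop_id hd_append2)
    ultimately show ?thesis by simp
  qed
qed

lemma Gs_Nil[simp]: "Gs \<psi> E [] = 1" by (simp add: Gs_def)

context cfp begin

lemma Kvanish: assumes th: "\<theta> = \<phi> \<or> \<theta> = \<psi>" and w: "w \<noteq> []" "hd w \<noteq> last w"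
  shows "bcum \<theta> (sg w) = 0"
proof -
  obtain c r where wr: "w = c # r" using w by (cases w) auto
  have r: "r \<noteq> []" using w wr by auto
  have r2: "r = butlast r @ [last r]" using r by simp
  have "c \<noteq> last r" using w wr r by simp
  then show ?thesis using final[OF th, of c "butlast r" "last r"] wr r2 by (metis append_Cons)
qed

lemma D_split: "Dd \<psi> w = EE \<psi> L w + EE \<psi> (\<not> L) w"
  using Kvanish[of \<psi> w] by (cases "w = []") (auto simp: Dd_def EE_def)

lemma XL_eq: "pmul (\<lambda>w. pone w - EE \<psi> L w) \<psi> v = (if v = [] \<or> hd v \<noteq> L then \<psi> v else 0)"
proof -
  have e: "pmul (\<lambda>w. pone w - EE \<psi> L w) \<psi> v = \<psi> v - pmul (EE \<psi> L) \<psi> v" by (simp add: pmul_diff_left)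
  show ?thesis
  proof (cases v)
    case Nil then show ?thesis using e by simp
  next
    case (Cons c v')
    show ?thesis
    proof (cases "c = L")
      case False then show ?thesis using e Cons by (simp add: pmul_EE_Cons EE_def)
    next
      case True
      have "pmul (EE \<psi> L) \<psi> v = (\<Sum>j\<le>length v'. Dd \<psi> (c # take j v') * \<psi> (drop j v'))"
        using True Cons by (simp add: pmul_EE_Cons D_split[of _ L] EE_def)
      also have "\<dots> = pmul (Dd \<psi>) \<psi> v"
      proof -
        have "pmul (Dd \<psi>) \<psi> (c # v') = Dd \<psi> [] * \<psi> (c # v') + pmul (\<lambda>u. Dd \<psi> (c # u)) \<psi> v'"
          by (rule pmul_Cons)
        also have "\<dots> = (\<Sum>j\<le>length v'. Dd \<psi> (c # take j v') * \<psi> (drop j v'))"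
          by (simp add: Dd_def pmul_def)
        finally show ?thesis using Cons by simp
      qed
      also have "\<dots> = \<psi> v" using mom_a[OF u\<psi>, of v] Cons by (simp add: pone_def)
      finally show ?thesis using e True Cons by simp
    qed
  qed
qed

lemma SI: assumes w: "w \<noteq> []"
  shows "(\<Sum>j\<in>{1..length w}. (if bd w j then Cand \<psi> L (take j w) * \<psi> (drop j w) else 0)) = \<psi> w"
proof -
  let ?GL = "Gs \<psi> L" and ?GN = "Gs \<psi> (\<not> L)"
  let ?XL = "pmul (\<lambda>w. pone w - EE \<psi> L w) \<psi>" and ?XN = "pmul (\<lambda>w. pone w - EE \<psi> (\<not> L) w) \<psi>"
  have trm: "(if bd w j then Cand \<psi> L (take j w) * \<psi> (drop j w) else 0)
      = ?GL (take j w) * ?XL (drop j w) + ?GN (take j w) * ?XN (drop j w)" if j: "j \<in> {1..length w}" for j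
  proof -
    let ?u = "take j w" and ?v = "drop j w"
    have u: "?u \<noteq> []" using j w by auto
    have pu: "pone ?u = 0" using u by (simp add: pone_def)
    have lu: "last ?u \<noteq> hd ?v \<longleftrightarrow> (last ?u = L \<longleftrightarrow> hd ?v \<noteq> L)" by auto
    show ?thesis
    proof (cases "?GL ?u \<noteq> 0")
      case True
      then have h: "hd ?u = L" "last ?u = L" using Gs_supp u by blast+
      have "?GN ?u = 0" using Gs_supp[of \<psi> "\<not> L" ?u] u h by auto
      then show ?thesis using h pu by (simp add: Cand_def bd_def XL_eq)
    next
      case False
      show ?thesis
      proof (cases "?GN ?u \<noteq> 0")
        case True
        then have h: "hd ?u = (\<not> L)" "last ?u = (\<not> L)" using Gs_supp u by blast+
        show ?thesis using h pu False XL_eq[of "\<not> L" ?v] by (auto simp: Cand_def bd_def)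
      next
        case False2: False
        then show ?thesis using False pu by (simp add: Cand_def)
      qed
    qed
  qed
  have "(\<Sum>j\<in>{1..length w}. (if bd w j then Cand \<psi> L (take j w) * \<psi> (drop j w) else 0))
     = (\<Sum>j\<in>{1..length w}. ?GL (take j w) * ?XL (drop j w) + ?GN (take j w) * ?XN (drop j w))"
    by (rule sum.cong[OF refl trm])
  also have "\<dots> = (pmul ?GL ?XL w - ?XL w) + (pmul ?GN ?XN w - ?XN w)"
    unfolding sum.distrib pmul_split0[of ?GL ?XL w] pmul_split0[of ?GN ?XN w] Gs_Nil by simp
  also have "pmul ?GL ?XL = \<psi>"
    using ginv_linv[of "EE \<psi> L"] by (simp add: pmul_assoc'[symmetric] Gs_def)
  also have "pmul ?GN ?XN = \<psi>"
    using ginv_linv[of "EE \<psi> (\<not> L)"] by (simp add: pmul_assoc'[symmetric] Gs_def)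
  finally have "(\<Sum>j\<in>{1..length w}. (if bd w j then Cand \<psi> L (take j w) * \<psi> (drop j w) else 0))
      = pmul (EE \<psi> L) \<psi> w + pmul (EE \<psi> (\<not> L)) \<psi> w"
    by (simp add: pmul_diff_left)
  also have "\<dots> = pmul (Dd \<psi>) \<psi> w"
  proof -
    have "Dd \<psi> = (\<lambda>w. EE \<psi> L w + EE \<psi> (\<not> L) w)" by (rule ext) (rule D_split)
    then show ?thesis by (simp add: pmul_add_left)
  qed
  also have "\<dots> = \<psi> w" using mom_a[OF u\<psi>, of w] w by (simp add: pone_def)
  finally show ?thesis .
qed

end

fun vb :: "bool list list \<Rightarrow> bool" where
  "vb [] = True"
| "vb (b # bs) = (b \<noteq> [] \<and> (\<forall>x\<in>set b. x = hd b) \<and> (bs \<noteq> [] \<longrightarrow> hd (hd bs) \<noteq> hd b) \<and> vb bs)"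

lemma blocks_props: "vb (blocks w) \<and> concat (blocks w) = w \<and> (w \<noteq> [] \<longrightarrow> blocks w \<noteq> [] \<and> hd (hd (blocks w)) = hd w)"
proof (induction w)
  case Nil then show ?case by simp
next
  case (Cons c w)
  show ?case
  proof (cases "blocks w")
    case Nil
    then have "w = []" using Cons.IH by auto
    then show ?thesis by simp
  next
    case (Cons b bs)
    have vbw: "vb (b # bs)" and cw: "b @ concat bs = w" using Cons Cons.IH by auto
    have bne: "b \<noteq> []" and pb: "\<forall>x\<in>set b. x = hd b" and nb: "bs \<noteq> [] \<longrightarrow> hd (hd bs) \<noteq> hd b" and vbs: "vb bs"
      using vbw by auto
    show ?thesis
    proof (cases "hd b = c")
      case True
      have bl: "blocks (c # w) = (c # b) # bs" using Cons True by simp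
      have p: "\<forall>x\<in>set (c # b). x = hd (c # b)" using pb True by (metis list.sel(1) set_ConsD)
      have n: "bs \<noteq> [] \<longrightarrow> hd (hd bs) \<noteq> hd (c # b)" using nb True by (metis list.sel(1))
      have v: "vb ((c # b) # bs)" using p n vbs by (simp only: vb.simps) simp
      have cc: "concat ((c # b) # bs) = c # w" using cw by simp
      show ?thesis unfolding bl using v cc by simp
    next
      case False
      have bl: "blocks (c # w) = [c] # b # bs" using Cons False by simp
      have v: "vb ([c] # b # bs)"
        unfolding vb.simps(2)[of "[c]"]
      proof (intro conjI)
        show "\<forall>x\<in>set [c]. x = hd [c]" by simp
        show "b # bs \<noteq> [] \<longrightarrow> hd (hd (b # bs)) \<noteq> hd [c]" using False by simp
        show "[c] \<noteq> []" by simp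
        show "vb (b # bs)" by (rule vbw)
      qed
      have cc: "concat ([c] # b # bs) = c # w" using cw by simp
      show ?thesis unfolding bl by (intro conjI impI; (rule v | rule cc | simp))
    qed
  qed
qed

lemma vb_take: "vb bs \<Longrightarrow> vb (take k bs)"
proof (induction bs arbitrary: k)
  case Nil then show ?case by simp
next
  case (Cons b bs)
  show ?case
  proof (cases k)
    case 0 then show ?thesis by simp
  next
    case (Suc k')
    have "take k' bs \<noteq> [] \<Longrightarrow> hd (take k' bs) = hd bs" by (cases bs; cases k') auto
    then show ?thesis using Cons Suc by auto
  qed
qed

lemma vb_concat: "vb bs \<Longrightarrow> bs \<noteq> [] \<Longrightarrow> concat bs \<noteq> [] \<and> hd (concat bs) = hd (hd bs)"
  by (cases bs) auto

lemma pure_nbd: assumes b: "b \<noteq> []" "\<forall>x\<in>set b. x = hd b" and j: "1 \<le> j" "j < length b"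
  shows "\<not> bd (b @ w') j"
proof -
  have d: "drop j (b @ w') = drop j b @ w'" "drop j b \<noteq> []" using j by auto
  have t: "take j (b @ w') = take j b" "take j b \<noteq> []" using j by auto
  have "last (take j b) \<in> set b" using t(2) by (meson in_set_takeD last_in_set)
  moreover have "hd (drop j b) \<in> set b" using d(2) by (meson hd_in_set in_set_dropD)
  ultimately have "last (take j b) = hd (drop j b)" using b by auto
  then show ?thesis using d t by (simp add: bd_def)
qed

lemma reidx: "vb bs \<Longrightarrow> bs \<noteq> [] \<Longrightarrow>
  (\<Sum>k\<in>{1..length bs}. F (concat (take k bs)) (concat (drop k bs))) =
  (\<Sum>j\<in>{1..length (concat bs)}. if bd (concat bs) j then F (take j (concat bs)) (drop j (concat bs)) else 0)"
proof (induction bs arbitrary: F)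
  case Nil then show ?case by simp
next
  case (Cons b bs)
  let ?m = "length b"
  have bne: "b \<noteq> []" and pb: "\<forall>x\<in>set b. x = hd b" and nb: "bs \<noteq> [] \<longrightarrow> hd (hd bs) \<noteq> hd b" and vbs: "vb bs"
    using Cons.prems by auto
  have m1: "?m \<ge> 1" using bne by (cases b) auto
  have inner: "(\<Sum>j\<in>{1..?m}. if bd (b @ w') j then F (take j (b @ w')) (drop j (b @ w')) else 0)
      = (if bd (b @ w') ?m then F b w' else 0)" for w'
  proof -
    have "{1..?m} = insert ?m {1..<?m}" using m1 by auto
    moreover have "(\<Sum>j\<in>{1..<?m}. if bd (b @ w') j then F (take j (b @ w')) (drop j (b @ w')) else 0) = 0"
      by (rule sum.neutral) (use pure_nbd[OF bne pb] in auto)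
    ultimately show ?thesis by simp
  qed
  show ?case
  proof (cases "bs = []")
    case True
    have inner0: "(\<Sum>j\<in>{1..?m}. if bd b j then F (take j b) (drop j b) else 0) = F b []"
    proof -
      have "{1..?m} = insert ?m {1..<?m}" using m1 by auto
      moreover have "(\<Sum>j\<in>{1..<?m}. if bd b j then F (take j b) (drop j b) else 0) = 0"
        by (rule sum.neutral) (use pure_nbd[OF bne pb, of _ "[]"] in auto)
      moreover have "bd b ?m" by (simp add: bd_def)
      ultimately show ?thesis by simp
    qed
    show ?thesis unfolding True using inner0 by (simp cong: if_cong)
  next
    case False
    let ?w' = "concat bs"
    have w'ne: "?w' \<noteq> []" and hw': "hd ?w' = hd (hd bs)" using vb_concat[OF vbs False] by auto
    have L: "(\<Sum>k\<in>{1..length (b # bs)}. F (concat (take k (b # bs))) (concat (drop k (b # bs))))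
        = F b ?w' + (\<Sum>k\<in>{1..length bs}. F (b @ concat (take k bs)) (concat (drop k bs)))"
    proof -
      define G where "G k = F (concat (take k (b # bs))) (concat (drop k (b # bs)))" for k
      have e: "{1..length (b # bs)} = insert 1 {Suc 1..Suc (length bs)}" by auto
      have "(\<Sum>k\<in>{1..length (b # bs)}. G k) = G 1 + (\<Sum>k\<in>{Suc 1..Suc (length bs)}. G k)"
        unfolding e by (subst sum.insert) auto
      also have "(\<Sum>k\<in>{Suc 1..Suc (length bs)}. G k) = (\<Sum>k\<in>{1..length bs}. G (Suc k))"
        by (simp only: sum.atLeast_Suc_atMost_Suc_shift comp_def)
      finally show ?thesis by (simp add: G_def)
    qed
    have IH: "(\<Sum>k\<in>{1..length bs}. F (b @ concat (take k bs)) (concat (drop k bs)))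
      = (\<Sum>j\<in>{1..length ?w'}. if bd ?w' j then F (b @ take j ?w') (drop j ?w') else 0)"
      using Cons.IH[OF vbs False, of "\<lambda>u v. F (b @ u) v"] by simp
    have bdm: "bd (b @ ?w') ?m"
    proof -
      have "last b = hd b" using bne pb by simp
      then show ?thesis using w'ne hw' nb False by (simp add: bd_def)
    qed
    have R: "(\<Sum>j\<in>{1..length (concat (b # bs))}. if bd (concat (b # bs)) j then F (take j (concat (b # bs))) (drop j (concat (b # bs))) else 0)
      = F b ?w' + (\<Sum>j\<in>{1..length ?w'}. if bd ?w' j then F (b @ take j ?w') (drop j ?w') else 0)"
    proof -
      let ?h = "\<lambda>j. if bd (b @ ?w') j then F (take j (b @ ?w')) (drop j (b @ ?w')) else 0"
      have "(\<Sum>j\<in>{1..?m + length ?w'}. ?h j) = (\<Sum>j\<in>{1..?m}. ?h j) + (\<Sum>j\<in>{?m + 1..?m + length ?w'}. ?h j)"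
        by (rule sum.ub_add_nat) simp
      also have "(\<Sum>j\<in>{1..?m}. ?h j) = F b ?w'" using inner[of ?w'] bdm by simp
      also have "(\<Sum>j\<in>{?m + 1..?m + length ?w'}. ?h j) = (\<Sum>j\<in>{1..length ?w'}. ?h (j + ?m))"
        using sum.shift_bounds_cl_nat_ivl[of ?h 1 ?m "length ?w'"] by (simp add: add.commute)
      also have "\<dots> = (\<Sum>j\<in>{1..length ?w'}. if bd ?w' j then F (b @ take j ?w') (drop j ?w') else 0)"
      proof (rule sum.cong[OF refl])
        fix j assume j: "j \<in> {1..length ?w'}"
        have tk: "take (j + ?m) (b @ ?w') = b @ take j ?w'" "drop (j + ?m) (b @ ?w') = drop j ?w'" by simp_all
        have tne: "take j ?w' \<noteq> []" using j w'ne by auto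
        have "bd (b @ ?w') (j + ?m) = bd ?w' j" using tne by (simp add: bd_def tk)
        then show "?h (j + ?m) = (if bd ?w' j then F (b @ take j ?w') (drop j ?w') else 0)" using tk by simp
      qed
      finally show ?thesis by (simp cong: if_cong)
    qed
    show ?thesis using L IH R by simp
  qed
qed

lemma pw_Suc': "pw P (Suc k) = pmul (pw P k) P"
proof (induction k)
  case 0 then show ?case by simp
next
  case (Suc k)
  have "pw P (Suc (Suc k)) = pmul P (pmul (pw P k) P)" using Suc.IH by (simp only: pw.simps)
  also have "\<dots> = pmul (pmul P (pw P k)) P" by (simp only: pmul_assoc')
  also have "\<dots> = pmul (pw P (Suc k)) P" by simp
  finally show ?case .
qed

lemma pmul_monT_last: "pmul Y (mon [T]) w = (if w \<noteq> [] \<and> last w = T then Y (butlast w) else 0)"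
proof (induction w arbitrary: Y)
  case Nil then show ?case by (simp add: mon_def)
next
  case (Cons c w)
  show ?case
  proof (cases "w = []")
    case True then show ?thesis by (simp add: pmul_Cons mon_def)
  next
    case False
    have "pmul Y (mon [T]) (c # w) = pmul (\<lambda>u. Y (c # u)) (mon [T]) w"
      using False by (simp add: pmul_Cons mon_def)
    then show ?thesis using Cons.IH False by simp
  qed
qed

lemma pwCs_Suc: "pw (Cs \<psi> T) (Suc k) w = (if w \<noteq> [] \<and> last w = T then ck \<psi> T k (butlast w) else 0)"
proof -
  have "pw (Cs \<psi> T) (Suc k) = pmul (ck \<psi> T k) (mon [T])"
    unfolding pw_Suc' ck_def by (simp only: Cs_def pmul_assoc')
  then show ?thesis by (simp only: pmul_monT_last)
qed

context cfp begin

lemma bcum_blocks: "vb bs \<Longrightarrow> bs \<noteq> [] \<Longrightarrow> bcum \<psi> bs = Cand \<psi> L (concat bs)"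
proof (induction "length bs" arbitrary: bs rule: less_induct)
  case less
  let ?n = "length bs"
  have n1: "?n \<ge> 1" using less.prems by (cases bs) auto
  have split: "(\<Sum>k\<in>{1..?n}. f k) = (\<Sum>k\<in>{1..<?n}. f k) + f ?n" for f :: "nat \<Rightarrow> complex"
  proof -
    have "{1..?n} = insert ?n {1..<?n}" using n1 by auto
    then show ?thesis by (simp add: add.commute)
  qed
  have psi1: "\<psi> [] = 1" using u\<psi> by (simp add: unital_def)
  have b: "\<psi> (concat bs) = (\<Sum>k\<in>{1..<?n}. bcum \<psi> (take k bs) * \<psi> (concat (drop k bs))) + bcum \<psi> bs"
    using less.prems by (subst (2) bcum.simps) simp
  have "\<psi> (concat bs) = (\<Sum>j\<in>{1..length (concat bs)}. if bd (concat bs) j then Cand \<psi> L (take j (concat bs)) * \<psi> (drop j (concat bs)) else 0)"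
    using SI[of "concat bs" L] vb_concat[OF less.prems] by simp
  also have "\<dots> = (\<Sum>k\<in>{1..?n}. Cand \<psi> L (concat (take k bs)) * \<psi> (concat (drop k bs)))"
    using reidx[OF less.prems, of "\<lambda>u v. Cand \<psi> L u * \<psi> v"] by simp
  also have "\<dots> = (\<Sum>k\<in>{1..<?n}. bcum \<psi> (take k bs) * \<psi> (concat (drop k bs))) + Cand \<psi> L (concat bs)"
  proof -
    have "(\<Sum>k\<in>{1..<?n}. Cand \<psi> L (concat (take k bs)) * \<psi> (concat (drop k bs)))
        = (\<Sum>k\<in>{1..<?n}. bcum \<psi> (take k bs) * \<psi> (concat (drop k bs)))"
    proof (rule sum.cong[OF refl])
      fix k assume k: "k \<in> {1..<?n}"
      then have "take k bs \<noteq> []" "length (take k bs) < ?n" "vb (take k bs)"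
        using less.prems vb_take by auto
      then show "Cand \<psi> L (concat (take k bs)) * \<psi> (concat (drop k bs)) = bcum \<psi> (take k bs) * \<psi> (concat (drop k bs))"
        using less.hyps by simp
    qed
    then show ?thesis using split[of "\<lambda>k. Cand \<psi> L (concat (take k bs)) * \<psi> (concat (drop k bs))"] psi1 by simp
  qed
  finally show ?case using b by simp
qed

lemma beta_b_eq: "beta_b \<psi> L w = Gs \<psi> L w"
proof (cases "w = []")
  case True then show ?thesis by (simp add: beta_b_def)
next
  case False
  have bp: "vb (blocks w)" "concat (blocks w) = w" "blocks w \<noteq> []" using blocks_props[of w] False by auto
  have bc: "bcum \<psi> (blocks w) = Gs \<psi> L w + Gs \<psi> (\<not> L) w"
    using bcum_blocks[OF bp(1,3), of L] bp(2) False by (simp add: Cand_def pone_def)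
  show ?thesis
  proof (cases "hd w = L \<and> last w = L")
    case True
    have "Gs \<psi> (\<not> L) w = 0" using Gs_supp[of \<psi> "\<not> L" w] True False by auto
    then show ?thesis using True False bc by (simp add: beta_b_def)
  next
    case F: False
    have "Gs \<psi> L w = 0" using Gs_supp[of \<psi> L w] F False by auto
    then show ?thesis unfolding beta_b_def by (simp only: if_not_P[OF False] if_not_P[OF F])
  qed
qed

lemma T2: assumes th: "\<theta> = \<phi> \<or> \<theta> = \<psi>"
  shows "beta_delta \<theta> T (T # w) = (\<Sum>k\<in>{1..length w + 1}. bcum \<theta> (replicate k [T]) * pw (Cs \<psi> T) (k - 1) w)"
proof (cases "w = []")
  case True then show ?thesis by (simp add: beta_delta_def pone_def)
next
  case False
  have k1: "pw (Cs \<psi> T) 0 w = 0" using False by (simp add: pone_def)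
  have split: "{1..length w + 1} = insert 1 {0 + 2..length w - 1 + 2}" using False by (cases w) auto
  show ?thesis
  proof (cases "last w = T")
    case False2: False
    have z: "pw (Cs \<psi> T) (k - 1) w = 0" for k
    proof (cases "k - 1")
      case 0 then show ?thesis using k1 by simp
    next
      case (Suc j) then show ?thesis unfolding Suc pwCs_Suc using False2 by simp
    qed
    have "(\<Sum>k\<in>{1..length w + 1}. bcum \<theta> (replicate k [T]) * pw (Cs \<psi> T) (k - 1) w) = 0"
      by (rule sum.neutral) (metis z mult_zero_right)
    moreover have "beta_delta \<theta> T (T # w) = 0" using False False2 by (simp add: beta_delta_def)
    ultimately show ?thesis by simp
  next
    case True
    define v where "v = butlast w"
    have w: "w = v @ [T]" using append_butlast_last_id[OF False] True by (simp add: v_def)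
    have lv: "length w - 1 = length v" using w by simp
    have "beta_delta \<theta> T (T # w) = bcum \<theta> (sg (T # v @ [T]))"
      using w by (simp add: beta_delta_def sg_def)
    also have "\<dots> = (\<Sum>k\<le>length v. ck \<psi> T k v * bcum \<theta> (replicate (Suc (Suc k)) [T]))"
      using final[OF th, of T v T] by simp
    also have "\<dots> = (\<Sum>k\<in>{1..length w + 1}. bcum \<theta> (replicate k [T]) * pw (Cs \<psi> T) (k - 1) w)"
    proof -
      have "(\<Sum>k\<in>{1..length w + 1}. bcum \<theta> (replicate k [T]) * pw (Cs \<psi> T) (k - 1) w)
          = (\<Sum>k\<in>{0 + 2..length v + 2}. bcum \<theta> (replicate k [T]) * pw (Cs \<psi> T) (k - 1) w)"
        unfolding split lv using False by (simp add: k1 pone_def)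
      also have "\<dots> = (\<Sum>k\<in>{0..length v}. bcum \<theta> (replicate (k + 2) [T]) * pw (Cs \<psi> T) (k + 1) w)"
        by (subst sum.shift_bounds_cl_nat_ivl) simp
      also have "\<dots> = (\<Sum>k\<le>length v. ck \<psi> T k v * bcum \<theta> (replicate (Suc (Suc k)) [T]))"
      proof -
        have "pw (Cs \<psi> T) (k + 1) w = ck \<psi> T k v" for k
          unfolding Suc_eq_plus1[symmetric] pwCs_Suc using w by simp
        then show ?thesis by (simp add: atMost_atLeast0 mult.commute)
      qed
      finally show ?thesis by simp
    qed
    finally show ?thesis .
  qed
qed

end

lemma smat_add: "smat (a + b) M = smat a M + smat b M" by (simp add: smat_def vec_eq_iff algebra_simps)
lemma smat_diff: "smat (a - b) M = smat a M - smat b M" by (simp add: smat_def vec_eq_iff algebra_simps)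
lemma smat_mult: "smat (a * b) M = smat a (smat b M)" by (simp add: smat_def vec_eq_iff)
lemma smat_0[simp]: "smat 0 M = 0" by (simp add: smat_def vec_eq_iff)
lemma smat_1[simp]: "smat 1 M = M" by (simp add: smat_def vec_eq_iff)
lemma smat_zeroR[simp]: "smat a 0 = 0" by (simp add: smat_def vec_eq_iff)
lemma smat_sum: "smat (\<Sum>i\<in>I. f i) M = (\<Sum>i\<in>I. smat (f i) M)"
  by (simp add: smat_def vec_eq_iff sum_distrib_right)
lemma smat_sumR: "smat c (\<Sum>i\<in>I. M i) = (\<Sum>i\<in>I. smat c (M i))"
  by (simp add: smat_def vec_eq_iff sum_distrib_left)
lemma smat_mmL: "smat a M ** N = smat a (M ** N)"
  by (simp add: smat_def vec_eq_iff matrix_matrix_mult_def sum_distrib_left mult.assoc)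
lemma smat_mmR: "M ** smat a N = smat a (M ** N)"
  by (simp add: smat_def vec_eq_iff matrix_matrix_mult_def sum_distrib_left algebra_simps)

lemma mm_add_rdistrib: "(A + B) ** C = A ** C + B ** (C::complex^'n^'n)"
  by (vector matrix_matrix_mult_def sum.distrib[symmetric] field_simps)

lemma mm_sum_left: "(\<Sum>i\<in>I. M i) ** (N::complex^'n^'n) = (\<Sum>i\<in>I. M i ** N)"
proof (cases "finite I")
  case True then show ?thesis by (induction I rule: finite_induct) (simp_all add: mm_add_rdistrib)
next
  case False then show ?thesis by simp
qed

lemma mm_sum_right: "(N::complex^'n^'n) ** (\<Sum>i\<in>I. M i) = (\<Sum>i\<in>I. N ** M i)"
proof (cases "finite I")
  case True then show ?thesis by (induction I rule: finite_induct) (simp_all add: matrix_add_ldistrib)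
next
  case False then show ?thesis by simp
qed

lemma wmat_Nil[simp]: "wmat A B [] = mat 1" by (simp add: wmat_def)
lemma wmat_Cons: "wmat A B (c # w) = (if c then A else B) ** wmat A B w" by (simp add: wmat_def)
lemma wmat_append: "wmat A B (u @ v) = wmat A B u ** wmat A B v"
  by (induction u) (simp_all add: wmat_Cons matrix_mul_assoc)

definition W :: "nat \<Rightarrow> bool list set" where "W n = {w. length w = n}"

lemma finite_W[simp]: "finite (W n)"
proof -
  have "W n = {xs. set xs \<subseteq> (UNIV :: bool set) \<and> length xs = n}" by (auto simp: W_def)
  then show ?thesis using finite_lists_length_eq[of "UNIV :: bool set" n] by simp
qed

definition Phi :: "(bool list \<Rightarrow> complex) \<Rightarrow> complex^'n^'n \<Rightarrow> complex^'n^'n \<Rightarrow> nat \<Rightarrow> complex^'n^'n" where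
  "Phi f A B n = (\<Sum>w\<in>W n. smat (f w) (wmat A B w))"

lemma apply_Psi_Phi: "apply_Psi L A B = Phi L A B"
  by (rule ext) (simp add: apply_Psi_def Phi_def W_def)

lemma split_W: "k \<le> n \<Longrightarrow> (\<Sum>w\<in>W n. H (take k w) (drop k w)) = (\<Sum>u\<in>W k. \<Sum>v\<in>W (n - k). H u v)"
proof -
  assume k: "k \<le> n"
  have "(\<Sum>u\<in>W k. \<Sum>v\<in>W (n - k). H u v) = (\<Sum>p\<in>W k \<times> W (n - k). H (fst p) (snd p))"
    by (simp add: sum.cartesian_product split_def)
  also have "\<dots> = (\<Sum>w\<in>W n. H (take k w) (drop k w))"
    by (rule sum.reindex_bij_witness[where j="\<lambda>p. fst p @ snd p" and i="\<lambda>w. (take k w, drop k w)"])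
       (use k in \<open>auto simp: W_def\<close>)
  finally show ?thesis by simp
qed

lemma Phi_mult: "Phi (pmul f g) A B n = ps_mult (Phi f A B) (Phi g A B) n"
proof -
  have "Phi (pmul f g) A B n = (\<Sum>w\<in>W n. \<Sum>k\<le>n. smat (f (take k w) * g (drop k w)) (wmat A B (take k w) ** wmat A B (drop k w)))"
    unfolding Phi_def pmul_def
    by (rule sum.cong[OF refl]) (simp add: W_def smat_sum wmat_append[symmetric])
  also have "\<dots> = (\<Sum>k\<le>n. \<Sum>w\<in>W n. smat (f (take k w) * g (drop k w)) (wmat A B (take k w) ** wmat A B (drop k w)))"
    by (rule sum.swap)
  also have "\<dots> = (\<Sum>k\<le>n. \<Sum>u\<in>W k. \<Sum>v\<in>W (n - k). smat (f u * g v) (wmat A B u ** wmat A B v))"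
  proof (rule sum.cong[OF refl])
    fix k assume "k \<in> {..n}"
    then show "(\<Sum>w\<in>W n. smat (f (take k w) * g (drop k w)) (wmat A B (take k w) ** wmat A B (drop k w)))
      = (\<Sum>u\<in>W k. \<Sum>v\<in>W (n - k). smat (f u * g v) (wmat A B u ** wmat A B v))"
      using split_W[of k n "\<lambda>u v. smat (f u * g v) (wmat A B u ** wmat A B v)"] by simp
  qed
  also have "\<dots> = ps_mult (Phi f A B) (Phi g A B) n"
    unfolding ps_mult_def Phi_def
    by (simp only: mm_sum_left) (simp only: mm_sum_right smat_mmL smat_mmR smat_mult[symmetric] mult.commute)
  finally show ?thesis .
qed

lemma W_0: "W 0 = {[]}" by (auto simp: W_def)

lemma Phi_pone: "Phi pone A B = ps_one"
proof
  fix n show "Phi pone A B n = ps_one n"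
  proof (cases n)
    case 0 then show ?thesis by (simp add: Phi_def W_0 ps_one_def pone_def)
  next
    case (Suc m)
    have "Phi pone A B n = (\<Sum>w\<in>W n. 0)"
      unfolding Phi_def by (rule sum.cong[OF refl]) (auto simp: W_def pone_def Suc)
    then show ?thesis by (simp add: ps_one_def Suc)
  qed
qed

lemma Phi_diff: "Phi (\<lambda>w. f w - g w) A B n = Phi f A B n - Phi g A B n"
  by (simp add: Phi_def smat_diff sum_subtractf)

lemma W_Suc_sum: "(\<Sum>w\<in>W (Suc m). F w) = (\<Sum>w\<in>W m. F (True # w)) + (\<Sum>w\<in>W m. F (False # w))"
proof -
  have e: "W (Suc m) = Cons True ` W m \<union> Cons False ` W m"
  proof
    show "W (Suc m) \<subseteq> Cons True ` W m \<union> Cons False ` W m"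
    proof
      fix w assume "w \<in> W (Suc m)"
      then obtain c w' where "w = c # w'" "length w' = m" by (auto simp: W_def length_Suc_conv)
      then show "w \<in> Cons True ` W m \<union> Cons False ` W m" by (cases c) (auto simp: W_def)
    qed
  qed (auto simp: W_def)
  show ?thesis unfolding e
    by (subst sum.union_disjoint) (auto simp: sum.reindex)
qed

lemma Phi_EE: "Phi (EE \<psi> T) A B n = ps_z (\<lambda>m. (if T then A else B) ** apply_ZPsi (beta_delta \<psi> T) T A B m) n"
proof (cases n)
  case 0 then show ?thesis by (simp add: Phi_def W_0 ps_z_def)
next
  case (Suc m)
  have e: "EE \<psi> T (T # w) = beta_delta \<psi> T (T # w)" for w
    by (simp add: EE_def beta_delta_def sg_def)
  have z: "EE \<psi> T ((\<not> T) # w) = 0" for w by (simp add: EE_def)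
  have "Phi (EE \<psi> T) A B n = (\<Sum>w\<in>W m. smat (EE \<psi> T (True # w)) (wmat A B (True # w)))
     + (\<Sum>w\<in>W m. smat (EE \<psi> T (False # w)) (wmat A B (False # w)))"
    unfolding Phi_def Suc W_Suc_sum by simp
  also have "\<dots> = (\<Sum>w\<in>W m. smat (EE \<psi> T (T # w)) (wmat A B (T # w)))"
    by (cases T) (simp_all add: EE_def)
  also have "\<dots> = (if T then A else B) ** apply_ZPsi (beta_delta \<psi> T) T A B m"
    unfolding apply_ZPsi_def by (simp add: e wmat_Cons smat_mmR mm_sum_right W_def)
  finally show ?thesis by (simp add: ps_z_def Suc)
qed

lemma Phi_mon: "Phi (mon [T]) A B n = (if n = 1 then (if T then A else B) else 0)"
proof -
  have "Phi (mon [T]) A B n = (\<Sum>w\<in>W n. if w = [T] then wmat A B w else 0)"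
    unfolding Phi_def by (rule sum.cong[OF refl]) (simp add: mon_def)
  also have "\<dots> = (if [T] \<in> W n then wmat A B [T] else 0)" by (simp add: sum.delta)
  finally show ?thesis by (auto simp: W_def wmat_Cons)
qed

lemma Phi_Cs: "Phi (Cs \<psi> T) A B n = ps_z (\<lambda>m. Phi (Gs \<psi> (\<not> T)) A B m ** (if T then A else B)) n"
proof -
  have "Phi (Cs \<psi> T) A B n = (\<Sum>k\<le>n. Phi (Gs \<psi> (\<not> T)) A B k ** Phi (mon [T]) A B (n - k))"
    by (simp add: Cs_def Phi_mult ps_mult_def)
  also have "\<dots> = (\<Sum>k\<le>n. if k = n - 1 \<and> n \<noteq> 0 then Phi (Gs \<psi> (\<not> T)) A B k ** (if T then A else B) else 0)"
    by (rule sum.cong[OF refl]) (auto simp: Phi_mon)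
  also have "\<dots> = ps_z (\<lambda>m. Phi (Gs \<psi> (\<not> T)) A B m ** (if T then A else B)) n"
    by (cases n) (simp_all add: ps_z_def sum.delta' del: One_nat_def)
  finally show ?thesis .
qed

lemma Phi_pw: "Phi (pw P k) A B = ps_pow (Phi P A B) k"
proof (induction k)
  case 0 then show ?case by (simp add: ps_pow_def Phi_pone)
next
  case (Suc k)
  show ?case
  proof
    fix n show "Phi (pw P (Suc k)) A B n = ps_pow (Phi P A B) (Suc k) n"
      by (simp add: Phi_mult Suc.IH ps_pow_def)
  qed
qed

context cfp begin

lemma inv_part: "ps_inverse_of (apply_Psi (beta_b \<psi> T) A B)
   (ps_one - ps_z (\<lambda>n. (if T then A else B) ** apply_ZPsi (beta_delta \<psi> T) T A B n))"
proof -
  have H: "apply_Psi (beta_b \<psi> T) A B = Phi (Gs \<psi> T) A B"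
  proof -
    have "beta_b \<psi> T = Gs \<psi> T" by (rule ext) (rule beta_b_eq)
    then show ?thesis by (simp add: apply_Psi_Phi)
  qed
  have M: "ps_one - ps_z (\<lambda>n. (if T then A else B) ** apply_ZPsi (beta_delta \<psi> T) T A B n)
      = Phi (\<lambda>w. pone w - EE \<psi> T w) A B"
  proof
    fix n show "(ps_one - ps_z (\<lambda>n. (if T then A else B) ** apply_ZPsi (beta_delta \<psi> T) T A B n)) n
      = Phi (\<lambda>w. pone w - EE \<psi> T w) A B n"
      by (simp add: Phi_diff Phi_pone Phi_EE)
  qed
  have l: "pmul (Gs \<psi> T) (\<lambda>w. pone w - EE \<psi> T w) = pone"
    unfolding Gs_def by (rule ginv_linv) simp
  have r: "pmul (\<lambda>w. pone w - EE \<psi> T w) (Gs \<psi> T) = pone"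
    unfolding Gs_def by (rule ginv_rinv) simp
  have "ps_mult (Phi (Gs \<psi> T) A B) (Phi (\<lambda>w. pone w - EE \<psi> T w) A B) = ps_one"
    by (rule ext) (simp add: Phi_mult[symmetric] l Phi_pone)
  moreover have "ps_mult (Phi (\<lambda>w. pone w - EE \<psi> T w) A B) (Phi (Gs \<psi> T) A B) = ps_one"
    by (rule ext) (simp add: Phi_mult[symmetric] r Phi_pone)
  ultimately show ?thesis unfolding H M ps_inverse_of_def by simp
qed

lemma eta_part: assumes th: "\<theta> = \<phi> \<or> \<theta> = \<psi>"
  shows "apply_ZPsi (beta_delta \<theta> T) T A B
    = eta_tilde \<theta> T (ps_z (\<lambda>n. apply_Psi (beta_b \<psi> (\<not> T)) A B n ** (if T then A else B)))"
proof
  fix n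
  have C: "ps_z (\<lambda>n. apply_Psi (beta_b \<psi> (\<not> T)) A B n ** (if T then A else B)) = Phi (Cs \<psi> T) A B"
  proof -
    have e: "beta_b \<psi> (\<not> T) = Gs \<psi> (\<not> T)" by (rule ext) (rule beta_b_eq)
    show ?thesis by (rule ext) (simp only: apply_Psi_Phi e Phi_Cs)
  qed
  have "eta_tilde \<theta> T (ps_z (\<lambda>n. apply_Psi (beta_b \<psi> (\<not> T)) A B n ** (if T then A else B))) n
      = (\<Sum>k\<in>{1..n+1}. smat (bcum \<theta> (replicate k [T])) (Phi (pw (Cs \<psi> T) (k - 1)) A B n))"
    unfolding eta_tilde_def C by (simp add: Phi_pw)
  also have "\<dots> = (\<Sum>k\<in>{1..n+1}. \<Sum>w\<in>W n. smat (bcum \<theta> (replicate k [T]) * pw (Cs \<psi> T) (k - 1) w) (wmat A B w))"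
    unfolding Phi_def by (simp add: smat_sumR smat_mult)
  also have "\<dots> = (\<Sum>w\<in>W n. smat (\<Sum>k\<in>{1..n+1}. bcum \<theta> (replicate k [T]) * pw (Cs \<psi> T) (k - 1) w) (wmat A B w))"
    by (subst sum.swap) (simp only: smat_sum)
  also have "\<dots> = (\<Sum>w\<in>W n. smat (beta_delta \<theta> T (T # w)) (wmat A B w))"
    by (rule sum.cong[OF refl]) (simp add: T2[OF th] W_def)
  also have "\<dots> = apply_ZPsi (beta_delta \<theta> T) T A B n" by (simp add: apply_ZPsi_def W_def)
  finally show "apply_ZPsi (beta_delta \<theta> T) T A B n = eta_tilde \<theta> T (ps_z (\<lambda>n. apply_Psi (beta_b \<psi> (\<not> T)) A B n ** (if T then A else B))) n"
    by simp
qed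

end

theorem proposition4:
  fixes \<phi> \<psi> :: "bool list \<Rightarrow> complex"
    and A B :: "complex^'n^'n"
  assumes "unital \<phi>" and "unital \<psi>"
    and "c_free \<phi> \<psi>"
  defines "HX \<equiv> apply_Psi (beta_b \<psi> True) A B"
    and "HY \<equiv> apply_Psi (beta_b \<psi> False) A B"
    and "FX \<equiv> apply_ZPsi (beta_delta \<psi> True) True A B"
    and "FY \<equiv> apply_ZPsi (beta_delta \<psi> False) False A B"
    and "FXphi \<equiv> apply_ZPsi (beta_delta \<phi> True) True A B"
    and "FYphi \<equiv> apply_ZPsi (beta_delta \<phi> False) False A B"
  shows "(ps_inverse_of HX (ps_one - ps_z (\<lambda>n. A ** FX n))) \<and>
    (ps_inverse_of HY (ps_one - ps_z (\<lambda>n. B ** FY n))) \<and>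
    (FX = eta_tilde \<psi> True (ps_z (\<lambda>n. HY n ** A))) \<and>
    (FY = eta_tilde \<psi> False (ps_z (\<lambda>n. HX n ** B))) \<and>
    (FXphi = eta_tilde \<phi> True (ps_z (\<lambda>n. HY n ** A))) \<and>
    (FYphi = eta_tilde \<phi> False (ps_z (\<lambda>n. HX n ** B)))"
proof -
  interpret cfp \<phi> \<psi> using assms(1-3) by unfold_locales
  have 1: "ps_inverse_of HX (ps_one - ps_z (\<lambda>n. A ** FX n))"
    using inv_part[of True A B] unfolding HX_def FX_def by simp
  have 2: "ps_inverse_of HY (ps_one - ps_z (\<lambda>n. B ** FY n))"
    using inv_part[of False A B] unfolding HY_def FY_def by simp
  have 3: "FX = eta_tilde \<psi> True (ps_z (\<lambda>n. HY n ** A))"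
    using eta_part[of \<psi> True A B] unfolding HY_def FX_def by simp
  have 4: "FY = eta_tilde \<psi> False (ps_z (\<lambda>n. HX n ** B))"
    using eta_part[of \<psi> False A B] unfolding HX_def FY_def by simp
  have 5: "FXphi = eta_tilde \<phi> True (ps_z (\<lambda>n. HY n ** A))"
    using eta_part[of \<phi> True A B] unfolding HY_def FXphi_def by simp
  have 6: "FYphi = eta_tilde \<phi> False (ps_z (\<lambda>n. HX n ** B))"
    using eta_part[of \<phi> False A B] unfolding HX_def FYphi_def by simp
  show ?thesis using 1 2 3 4 5 6 by simp
qed

end
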